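(* Let $d \ge 3$, $F \leq F' \leq \mathrm{Sym}(\Omega)$ with $F'$ preserving each $F$-orbit in $\Omega$, and let $n = [F':F]$. Then the map $\varphi: G(F,F') \to G_{n,d}$, $\varphi(\gamma) = (\rho_\gamma, \gamma)$, where $\rho_\gamma = (\rho_{\gamma,v})_{v \in V_d}$ and $\rho_{\gamma,v} = \alpha(\sigma(\gamma,\gamma^{-1}v))$, is a well-defined group homomorphism which is injective and continuous, and whose image is closed and cocompact in $G_{n,d}$.
   Context: $\Omega$ is a set with $|\Omega|=d$; $T_d$ is the $d$-regular tree with vertex set $V_d$, edge set $E_d$, and a coloring $c: E_d \to \Omega$ restricting at every vertex $v$ to a bijection from the set $E(v)$ of edges at $v$ onto $\Omega$. The local permutation of $g\in\mathrm{Aut}(T_d)$ at $v$ is $\sigma(g,v) = c|_{E(gv)} \circ g \circ (c|_{E(v)})^{-1}$. $U(F)$ is the group of $g$ with $\sigma(g,v) \in F$ for all $v$; $G(F,F')$ is the group of $g$ with $\sigma(g,v) \in F'$ for all $v$ and $\sigma(g,v) \in F$ for all but finitely many $v$, endowed with the group topology for which the inclusion of $U(F)$ (with topology induced from $\mathrm{Aut}(T_d)$) is continuous and open. $\Sigma_n = \{0,\dots,n-1\}$, $\mathfrak{S}_n = \mathrm{Sym}(\Sigma_n)$, $\mathfrak{S}_{n-1}$ the stabilizer of $0$. Fix a bijection $\Sigma_n \to F'/F$ sending $0$ to the coset $F$; $\alpha: F' \to \mathfrak{S}_n$ is the homomorphism induced by the left action of $F'$ on $F'/F$ (so $\alpha(F)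 \leq \mathfrak{S}_{n-1}$). $G_{n,d} = \mathfrak{S}_n^{V_d,\mathfrak{S}_{n-1}} \rtimes \mathrm{Aut}(T_d)$, where $\mathfrak{S}_n^{V_d,\mathfrak{S}_{n-1}}$ is the group of $(\sigma_v)_{v\in V_d}$ with $\sigma_v \in \mathfrak S_{n-1}$ for all but finitely many $v$, $\mathrm{Aut}(T_d)$ acting by $(\gamma\sigma)_v=\sigma_{\gamma^{-1}v}$; it carries the locally compact topology for which $\mathfrak{S}_{n-1}^{V_d}\rtimes\mathrm{Aut}(T_d)$ with the product topology is an open subgroup. *)

theory Defs
  imports "HOL-Analysis.Analysis"
begin

text \<open>Vertices of T_d are reduced words over the colour set Omega = {0..<d}: lists with
entries < d and no two consecutive entries equal. The vertex w is joined to w@[a]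
by an edge of colour a. Every vertex has exactly one edge of each colour, so this is
the d-regular tree with a legal colouring (unique up to colour-preserving isomorphism).\<close>

definition tree_V :: "nat \<Rightarrow> nat list set" where
  "tree_V d = {w. set w \<subseteq> {..<d} \<and> (\<forall>i. Suc i < length w \<longrightarrow> w ! i \<noteq> w ! Suc i)}"

definition tree_adj :: "nat \<Rightarrow> nat list \<Rightarrow> nat list \<Rightarrow> bool" where
  "tree_adj d x y \<longleftrightarrow> x \<in> tree_V d \<and> y \<in> tree_V d \<and>
     ((\<exists>a<d. y = x @ [a]) \<or> (\<exists>a<d. x = y @ [a]))"

definition edge_col :: "nat list \<Rightarrow> nat list \<Rightarrow> nat" where
  "edge_col x y = (if length x < length y then last y else last x)"

definition nbr :: "nat list \<Rightarrow> nat \<Rightarrow> nat list" where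
  "nbr v a = (if v \<noteq> [] \<and> last v = a then butlast v else v @ [a])"

definition Aut :: "nat \<Rightarrow> (nat list \<Rightarrow> nat list) set" where
  "Aut d = {g. bij_betw g (tree_V d) (tree_V d) \<and>
      (\<forall>x\<in>tree_V d. \<forall>y\<in>tree_V d. tree_adj d x y \<longleftrightarrow> tree_adj d (g x) (g y)) \<and>
      (\<forall>x. x \<notin> tree_V d \<longrightarrow> g x = x)}"

definition aut_inv :: "nat \<Rightarrow> (nat list \<Rightarrow> nat list) \<Rightarrow> nat list \<Rightarrow> nat list" where
  "aut_inv d g = (\<lambda>x. if x \<in> tree_V d then inv_into (tree_V d) g x else x)"

text \<open>local permutation sigma(g,v) = c|E(gv) o g o (c|E(v))^{-1}, a permutation of {..<d}
(extended by the identity outside {..<d})\<close>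
definition loc_perm :: "nat \<Rightarrow> (nat list \<Rightarrow> nat list) \<Rightarrow> nat list \<Rightarrow> nat \<Rightarrow> nat" where
  "loc_perm d g v = (\<lambda>a. if a < d then edge_col (g v) (g (nbr v a)) else a)"

definition perm_group :: "nat set \<Rightarrow> (nat \<Rightarrow> nat) set \<Rightarrow> bool" where
  "perm_group A P \<longleftrightarrow> P \<subseteq> {p. p permutes A} \<and> id \<in> P \<and>
     (\<forall>p\<in>P. \<forall>q\<in>P. p \<circ> q \<in> P) \<and> (\<forall>p\<in>P. inv p \<in> P)"

definition lcosets :: "(nat \<Rightarrow> nat) set \<Rightarrow> (nat \<Rightarrow> nat) set \<Rightarrow> (nat \<Rightarrow> nat) set set" where
  "lcosets F' F = {(\<lambda>x. f \<circ> x) ` F | f. f \<in> F'}"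

text \<open>alpha : F' -> S_n induced by the left action of F' on F'/F, transported along the
bijection beta : {..<n} -> F'/F (identity outside {..<n})\<close>
definition coset_action :: "nat \<Rightarrow> (nat \<Rightarrow> (nat \<Rightarrow> nat) set) \<Rightarrow> (nat \<Rightarrow> nat) \<Rightarrow> nat \<Rightarrow> nat" where
  "coset_action n \<beta> f = (\<lambda>i. if i < n then inv_into {..<n} \<beta> ((\<lambda>x. f \<circ> x) ` \<beta> i) else i)"

definition U_grp :: "nat \<Rightarrow> (nat \<Rightarrow> nat) set \<Rightarrow> (nat list \<Rightarrow> nat list) set" where
  "U_grp d F = {g \<in> Aut d. \<forall>v\<in>tree_V d. loc_perm d g v \<in> F}"

definition G_grp :: "nat \<Rightarrow> (nat \<Rightarrow> nat) set \<Rightarrow> (nat \<Rightarrow> nat) set \<Rightarrow> (nat list \<Rightarrow> nat list) set" where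
  "G_grp d F F' = {g \<in> Aut d. (\<forall>v\<in>tree_V d. loc_perm d g v \<in> F') \<and>
                     finite {v \<in> tree_V d. loc_perm d g v \<notin> F}}"

text \<open>Group topology on G(F,F') in which U(F), with the topology induced from the
permutation topology of Aut(T_d), is an open subgroup: basic neighbourhoods of g are
g (U(F) \<inter> pointwise stabiliser of a finite set S of vertices).\<close>
definition G_top :: "nat \<Rightarrow> (nat \<Rightarrow> nat) set \<Rightarrow> (nat \<Rightarrow> nat) set \<Rightarrow> (nat list \<Rightarrow> nat list) topology" where
  "G_top d F F' = topology (\<lambda>W. W \<subseteq> G_grp d F F' \<and>
     (\<forall>g\<in>W. \<exists>S. finite S \<and> S \<subseteq> tree_V d \<and>
         {g \<circ> u | u. u \<in> U_grp d F \<and> (\<forall>v\<in>S. u v = v)} \<subseteq> W))"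

type_synonym elt = "(nat list \<Rightarrow> nat \<Rightarrow> nat) \<times> (nat list \<Rightarrow> nat list)"

definition Gnd :: "nat \<Rightarrow> nat \<Rightarrow> elt set" where
  "Gnd n d = {(\<sigma>, \<gamma>). \<gamma> \<in> Aut d \<and> (\<forall>v\<in>tree_V d. \<sigma> v permutes {..<n}) \<and>
       (\<forall>v. v \<notin> tree_V d \<longrightarrow> \<sigma> v = id) \<and> finite {v \<in> tree_V d. \<sigma> v 0 \<noteq> 0}}"

definition Gnd0 :: "nat \<Rightarrow> nat \<Rightarrow> elt set" where
  "Gnd0 n d = {(\<sigma>, \<gamma>) \<in> Gnd n d. \<forall>v\<in>tree_V d. \<sigma> v 0 = 0}"

text \<open>semidirect product multiplication: (s,g)(t,h) = (s . g t, g h), (g t)_v = t_{g^{-1} v}\<close>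
definition Gnd_mult :: "nat \<Rightarrow> elt \<Rightarrow> elt \<Rightarrow> elt" where
  "Gnd_mult d x y = ((\<lambda>v. if v \<in> tree_V d then fst x v \<circ> fst y (aut_inv d (snd x) v) else id),
                      snd x \<circ> snd y)"

text \<open>topology: S_{n-1}^{V_d} \<rtimes> Aut(T_d) with the product topology (S_{n-1} discrete,
Aut(T_d) with the permutation topology) is an open subgroup; basic neighbourhoods of x are
x . {(t,h) in the open subgroup | t_v = id and h v = v for v in a finite set S}.\<close>
definition Gnd_top :: "nat \<Rightarrow> nat \<Rightarrow> elt topology" where
  "Gnd_top n d = topology (\<lambda>W. W \<subseteq> Gnd n d \<and>
     (\<forall>x\<in>W. \<exists>S. finite S \<and> S \<subseteq> tree_V d \<and>
        {Gnd_mult d x y | y. y \<in> Gnd0 n d \<and> (\<forall>v\<in>S. fst y v = id \<and> snd y v = v)} \<subseteq> W))"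

definition phi :: "nat \<Rightarrow> nat \<Rightarrow> (nat \<Rightarrow> (nat \<Rightarrow> nat) set) \<Rightarrow> (nat list \<Rightarrow> nat list) \<Rightarrow> elt" where
  "phi n d \<beta> \<gamma> = ((\<lambda>v. if v \<in> tree_V d
       then coset_action n \<beta> (loc_perm d \<gamma> (aut_inv d \<gamma> v)) else id), \<gamma>)"

definition cocompact :: "'a topology \<Rightarrow> ('a \<Rightarrow> 'a \<Rightarrow> 'a) \<Rightarrow> 'a set \<Rightarrow> bool" where
  "cocompact X m H \<longleftrightarrow> (\<exists>Q :: 'a set topology.
      quotient_map X Q (\<lambda>x. m x ` H) \<and> compact_space Q)"

end

theory Submission
  imports Defs
begin


abbreviation "V d \<equiv> tree_V d"

lemma tree_V_Nil[simp]: "[] \<in> tree_V d"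
  by (simp add: tree_V_def)

lemma tree_V_snoc: "w @ [a] \<in> tree_V d \<longleftrightarrow> w \<in> tree_V d \<and> a < d \<and> (w \<noteq> [] \<longrightarrow> last w \<noteq> a)"
proof -
  let ?R = "\<lambda>w. \<forall>i. Suc i < length w \<longrightarrow> w ! i \<noteq> w ! Suc i"
  have 1: "?R w \<and> (w \<noteq> [] \<longrightarrow> last w \<noteq> a)" if h: "?R (w@[a])"
  proof
    show "?R w"
    proof (intro allI impI)
      fix i assume "Suc i < length w"
      then show "w ! i \<noteq> w ! Suc i" using h[rule_format, of i] by (simp add: nth_append)
    qed
    show "w \<noteq> [] \<longrightarrow> last w \<noteq> a"
      using h[rule_format, of "length w - 1"] by (auto simp add: nth_append last_conv_nth)
  qed
  have 2: "?R (w@[a])" if h: "?R w" "w \<noteq> [] \<longrightarrow> last w \<noteq> a"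
  proof (intro allI impI)
    fix i assume i: "Suc i < length (w @ [a])"
    show "(w @ [a]) ! i \<noteq> (w @ [a]) ! Suc i"
    proof (cases "Suc i < length w")
      case True then show ?thesis using h by (simp add: nth_append)
    next
      case False then have "i = length w - 1" "w \<noteq> []" using i by auto
      then show ?thesis using h by (auto simp: nth_append last_conv_nth)
    qed
  qed
  show ?thesis using 1 2 by (auto simp: tree_V_def)
qed

lemma tree_V_butlast: "w \<in> tree_V d \<Longrightarrow> butlast w \<in> tree_V d"
  by (cases w rule: rev_cases) (auto simp: tree_V_snoc)

lemma tree_V_prefix: "w @ u \<in> tree_V d \<Longrightarrow> w \<in> tree_V d"
  by (induction u rule: rev_induct) (auto simp: tree_V_snoc simp flip: append_assoc)

lemma tree_V_last: "w \<in> tree_V d \<Longrightarrow> w \<noteq> [] \<Longrightarrow> last w < d"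
  by (cases w rule: rev_cases) (auto simp: tree_V_snoc)

lemma nbr_in_V: "v \<in> tree_V d \<Longrightarrow> a < d \<Longrightarrow> nbr v a \<in> tree_V d"
  by (auto simp: nbr_def tree_V_butlast tree_V_snoc)

lemma nbr_nbr: "v \<in> tree_V d \<Longrightarrow> a < d \<Longrightarrow> nbr (nbr v a) a = v"
proof (cases v rule: rev_cases)
  case (snoc ys y)
  assume "v \<in> tree_V d" "a < d"
  then show ?thesis using snoc by (cases "y = a") (auto simp: nbr_def tree_V_snoc butlast_append)
qed (auto simp: nbr_def)

lemma edge_col_nbr: "v \<in> tree_V d \<Longrightarrow> a < d \<Longrightarrow> edge_col v (nbr v a) = a"
  by (cases v rule: rev_cases) (auto simp: nbr_def edge_col_def)

lemma edge_col_nbr': "v \<in> tree_V d \<Longrightarrow> a < d \<Longrightarrow> edge_col (nbr v a) v = a"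
  by (cases v rule: rev_cases) (auto simp: nbr_def edge_col_def)

lemma nbr_inj: "v \<in> tree_V d \<Longrightarrow> a < d \<Longrightarrow> b < d \<Longrightarrow> nbr v a = nbr v b \<Longrightarrow> a = b"
  by (metis edge_col_nbr)

lemma nbr_neq: "nbr v a \<noteq> v"
  by (cases v rule: rev_cases) (auto simp: nbr_def)

lemma adj_iff: "tree_adj d x y \<longleftrightarrow> x \<in> tree_V d \<and> (\<exists>a<d. y = nbr x a)"
proof
  assume h: "tree_adj d x y"
  then have xy: "x \<in> tree_V d" "y \<in> tree_V d" by (auto simp: tree_adj_def)
  from h show "x \<in> tree_V d \<and> (\<exists>a<d. y = nbr x a)"
  proof (auto simp: tree_adj_def)
    fix a assume "a < d" "y = x @ [a]"
    then show "\<exists>b<d. x @ [a] = nbr x b" using xy by (intro exI[of _ a]) (auto simp: nbr_def tree_V_snoc)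
  next
    fix a assume "a < d" "x = y @ [a]"
    then show "\<exists>b<d. y = nbr (y @ [a]) b" by (intro exI[of _ a]) (auto simp: nbr_def)
  qed
next
  assume h: "x \<in> tree_V d \<and> (\<exists>a<d. y = nbr x a)"
  then obtain a where a: "a < d" "y = nbr x a" by auto
  have "y \<in> tree_V d" using h a nbr_in_V by auto
  then show "tree_adj d x y" using h a
    by (cases x rule: rev_cases) (auto simp: tree_adj_def nbr_def)
qed


definition walk :: "nat list \<Rightarrow> nat list \<Rightarrow> nat list" where
  "walk v cs = foldl nbr v cs"

lemma walk_Nil[simp]: "walk v [] = v" and walk_Cons[simp]: "walk v (c#cs) = walk (nbr v c) cs"
  and walk_snoc[simp]: "walk v (cs@[c]) = nbr (walk v cs) c" and walk_append: "walk v (cs@ds) = walk (walk v cs) ds"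
  by (auto simp: walk_def)

lemma walk_in_V: "v \<in> tree_V d \<Longrightarrow> set cs \<subseteq> {..<d} \<Longrightarrow> walk v cs \<in> tree_V d"
  by (induction cs arbitrary: v) (auto simp: nbr_in_V)

lemma tree_V_set: "w \<in> tree_V d \<Longrightarrow> set w \<subseteq> {..<d}"
  by (auto simp: tree_V_def)

lemma walk_rev_self: "x \<in> tree_V d \<Longrightarrow> walk x (rev x) = []"
proof (induction x rule: rev_induct)
  case (snoc a x) then show ?case by (simp add: nbr_def tree_V_snoc)
qed simp

lemma walk_Nil_self: "y \<in> tree_V d \<Longrightarrow> walk [] y = y"
proof (induction y rule: rev_induct)
  case (snoc a y) then show ?case by (auto simp add: nbr_def tree_V_snoc)
qed simp

fun red :: "nat list \<Rightarrow> nat list" where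
  "red [] = []"
| "red (c#cs) = (case red cs of [] \<Rightarrow> [c] | c'#r \<Rightarrow> if c' = c then r else c#c'#r)"

fun rd :: "nat list \<Rightarrow> bool" where
  "rd [] = True" | "rd [c] = True" | "rd (a#b#r) = (a \<noteq> b \<and> rd (b#r))"

lemma rd_iff: "rd cs \<longleftrightarrow> (\<forall>i. Suc i < length cs \<longrightarrow> cs!i \<noteq> cs!Suc i)"
proof (induction cs rule: rd.induct)
  case (3 a b r)
  show ?case
  proof
    assume h: "rd (a#b#r)"
    show "\<forall>i. Suc i < length (a#b#r) \<longrightarrow> (a#b#r)!i \<noteq> (a#b#r)!Suc i"
    proof (intro allI impI)
      fix i assume "Suc i < length (a#b#r)"
      then show "(a#b#r)!i \<noteq> (a#b#r)!Suc i" using h 3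
        by (cases i) auto
    qed
  next
    assume h: "\<forall>i. Suc i < length (a#b#r) \<longrightarrow> (a#b#r)!i \<noteq> (a#b#r)!Suc i"
    have "a \<noteq> b" using h[rule_format, of 0] by simp
    moreover have "\<forall>i. Suc i < length (b#r) \<longrightarrow> (b#r)!i \<noteq> (b#r)!Suc i"
      using h by (metis Suc_less_eq length_Cons nth_Cons_Suc)
    ultimately show "rd (a#b#r)" using 3 by simp
  qed
qed auto

lemma tree_V_rd: "cs \<in> tree_V d \<longleftrightarrow> rd cs \<and> set cs \<subseteq> {..<d}"
  by (auto simp: tree_V_def rd_iff)

lemma red_set: "set (red cs) \<subseteq> set cs"
  by (induction cs) (auto split: list.splits if_splits)

lemma red_rd: "rd (red cs)"
proof (induction cs)
  case (Cons c cs)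
  then show ?case by (cases "red cs" rule: rd.cases) (auto split: list.splits)
qed simp

lemma walk_red: "v \<in> tree_V d \<Longrightarrow> set cs \<subseteq> {..<d} \<Longrightarrow> walk v (red cs) = walk v cs"
proof (induction cs arbitrary: v)
  case (Cons c cs)
  have IH: "walk (nbr v c) (red cs) = walk (nbr v c) cs"
    using Cons by (auto intro!: Cons.IH nbr_in_V)
  show ?case
  proof (cases "red cs")
    case Nil then show ?thesis using IH by simp
  next
    case (Cons c' r)
    then show ?thesis using IH \<open>v \<in> tree_V d\<close> \<open>set (c#cs) \<subseteq> {..<d}\<close> by (auto simp: nbr_nbr)
  qed
qed simp

lemma walk_shape:
  assumes "v \<in> tree_V d" "cs \<in> tree_V d"
  shows "(\<exists>j. j \<le> length v \<and> cs = rev (drop (length v - j) v) \<and> walk v cs = take (length v - j) v) \<or>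
         (\<exists>j ds. j \<le> length v \<and> ds \<noteq> [] \<and> cs = rev (drop (length v - j) v) @ ds \<and>
                  walk v cs = take (length v - j) v @ ds)"
  using assms(2)
proof (induction cs rule: rev_induct)
  case Nil then show ?case by (intro disjI1 exI[of _ 0]) auto
next
  case (snoc c cs)
  have cs: "cs \<in> tree_V d" "c < d" "cs \<noteq> [] \<longrightarrow> last cs \<noteq> c" using snoc.prems by (auto simp: tree_V_snoc)
  note IH = snoc.IH[OF cs(1)]
  show ?case
  proof (cases "\<exists>j. j \<le> length v \<and> cs = rev (drop (length v - j) v) \<and> walk v cs = take (length v - j) v")
    case True
    then obtain j where j: "j \<le> length v" "cs = rev (drop (length v - j) v)" "walk v cs = take (length v - j) v" by auto
    show ?thesis
    proof (cases "j < length v \<and> c = v ! (length v - j - 1)")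
      case True
      have e1: "take (length v - j) v = take (length v - j - 1) v @ [v ! (length v - j - 1)]"
      proof -
        have "Suc (length v - j - 1) = length v - j" using True by arith
        then show ?thesis using take_Suc_conv_app_nth[of "length v - j - 1" v] True by simp
      qed
      have e2: "drop (length v - j - 1) v = v ! (length v - j - 1) # drop (length v - j) v"
      proof -
        have "Suc (length v - j - 1) = length v - j" using True by arith
        then show ?thesis using Cons_nth_drop_Suc[of "length v - j - 1" v] True by simp
      qed
      have "walk v (cs @ [c]) = take (length v - (j+1)) v"
      proof -
        have "walk v (cs@[c]) = nbr (take (length v - j) v) c" using j(3) by simp
        also have "\<dots> = take (length v - (j+1)) v" using e1 True by (simp add: nbr_def)
        finally show ?thesis .
      qed
      moreover have "cs @ [c] = rev (drop (length v - (j+1)) v)" using j True e2 by simp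
      moreover have "j+1 \<le> length v" using True by simp
      ultimately show ?thesis by blast
    next
      case False
      have "walk v (cs @ [c]) = take (length v - j) v @ [c]"
      proof (cases "take (length v - j) v = []")
        case True then show ?thesis using j by (simp add: nbr_def)
      next
        case F: False
        then have "j < length v" using j by auto
        then have "last (take (length v - j) v) = v ! (length v - j - 1)"
        proof -
          have "last (take (length v - j) v) = take (length v - j) v ! (length v - j - 1)"
            using F by (simp add: last_conv_nth)
          then show ?thesis using \<open>j < length v\<close> by simp
        qed
        then show ?thesis using j False F \<open>j < length v\<close> by (simp add: nbr_def)
      qed
      then show ?thesis using j by (intro disjI2 exI[of _ j] exI[of _ "[c]"]) auto
    qed
  next
    case False
    then obtain j ds where j: "j \<le> length v" "ds \<noteq> []" "cs = rev (drop (length v - j) v) @ ds"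
      "walk v cs = take (length v - j) v @ ds" using IH by blast
    have "last cs = last ds" using j by simp
    then have "walk v (cs @ [c]) = take (length v - j) v @ ds @ [c]"
    proof -
      have "walk v (cs @ [c]) = nbr (take (length v - j) v @ ds) c" using j(4) by simp
      also have "\<dots> = take (length v - j) v @ ds @ [c]" using j(2) cs \<open>last cs = last ds\<close> j(3) by (simp add: nbr_def)
      finally show ?thesis .
    qed
    then show ?thesis using j by (intro disjI2 exI[of _ j] exI[of _ "ds@[c]"]) auto
  qed
qed

lemma walk_no_return:
  assumes "v \<in> tree_V d" "cs \<in> tree_V d" "cs \<noteq> []"
  shows "walk v cs \<noteq> v"
proof
  assume eq: "walk v cs = v"
  from walk_shape[OF assms(1,2)] show False
  proof
    assume "\<exists>j. j \<le> length v \<and> cs = rev (drop (length v - j) v) \<and> walk v cs = take (length v - j) v"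
    then obtain j where j: "j \<le> length v" "cs = rev (drop (length v - j) v)" "walk v cs = take (length v - j) v" by auto
    have "j = length cs" using j by simp
    then have "j > 0" using assms by simp
    have "length (walk v cs) = length v - j" using j by simp
    then show False using eq \<open>j > 0\<close> j(1) by simp
  next
    assume "\<exists>j ds. j \<le> length v \<and> ds \<noteq> [] \<and> cs = rev (drop (length v - j) v) @ ds \<and> walk v cs = take (length v - j) v @ ds"
    then obtain j ds where j: "j \<le> length v" "ds \<noteq> []" "cs = rev (drop (length v - j) v) @ ds" "walk v cs = take (length v - j) v @ ds" by blast
    have "length (walk v cs) = length v - j + length ds" using j by simp
    then have l: "length ds = j" using eq j(1) by simp
    have dsd: "ds = drop (length v - j) v" using j(4) eq by (metis append_take_drop_id same_append_eq)
    then have cs: "cs = rev ds @ ds" using j by simp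
    have jpos: "j > 0" using l j by auto
    have "rd cs" using assms(2) tree_V_rd by auto
    then have "\<forall>i. Suc i < length cs \<longrightarrow> cs!i \<noteq> cs!Suc i" using rd_iff by blast
    moreover have "Suc (j-1) = j" using jpos by simp
    moreover have "Suc (j-1) < length cs" using jpos l cs by simp
    ultimately have "cs ! (j - 1) \<noteq> cs ! j" by metis
    moreover have "cs ! (j-1) = ds ! 0" using cs l jpos by (simp add: nth_append rev_nth)
    moreover have "cs ! j = ds ! 0" using cs l by (simp add: nth_append)
    ultimately show False by simp
  qed
qed

definition loc :: "nat \<Rightarrow> (nat list \<Rightarrow> nat list) \<Rightarrow> bool" where
  "loc d g \<longleftrightarrow> (\<forall>w\<in>tree_V d. g w \<in> tree_V d) \<and>
     (\<forall>w\<in>tree_V d. \<exists>p. p permutes {..<d} \<and> (\<forall>a<d. g (nbr w a) = nbr (g w) (p a)))"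

lemma loc_walk:
  assumes g: "loc d g" and x: "x \<in> tree_V d" and cs: "cs \<in> tree_V d"
  shows "\<exists>cs'. cs' \<in> tree_V d \<and> length cs' = length cs \<and> g (walk x cs) = walk (g x) cs' \<and>
     (cs \<noteq> [] \<longrightarrow> (\<forall>p. p permutes {..<d} \<and> (\<forall>a<d. g (nbr (walk x cs) a) = nbr (g (walk x cs)) (p a)) \<longrightarrow> last cs' = p (last cs)))"
  using cs
proof (induction cs rule: rev_induct)
  case Nil then show ?case by (intro exI[of _ "[]"]) auto
next
  case (snoc c cs)
  have cs: "cs \<in> tree_V d" "c < d" "cs \<noteq> [] \<longrightarrow> last cs \<noteq> c" using snoc.prems by (auto simp: tree_V_snoc)
  obtain cs' where cs': "cs' \<in> tree_V d" "length cs' = length cs" "g (walk x cs) = walk (g x) cs'"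
    "cs \<noteq> [] \<longrightarrow> (\<forall>p. p permutes {..<d} \<and> (\<forall>a<d. g (nbr (walk x cs) a) = nbr (g (walk x cs)) (p a)) \<longrightarrow> last cs' = p (last cs))"
    using snoc.IH[OF cs(1)] by blast
  let ?w = "walk x cs"
  have wV: "?w \<in> tree_V d" using walk_in_V[OF x tree_V_set[OF cs(1)]] .
  then obtain p where p: "p permutes {..<d}" "\<forall>a<d. g (nbr ?w a) = nbr (g ?w) (p a)" using g by (auto simp: loc_def)
  have gw: "g ?w \<in> tree_V d" using g wV by (auto simp: loc_def)
  have pc: "p c < d" using permutes_in_image[OF p(1)] cs(2) by simp
  have red: "cs'@[p c] \<in> tree_V d"
  proof -
    have "cs' \<noteq> [] \<longrightarrow> last cs' \<noteq> p c"
    proof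
      assume "cs' \<noteq> []"
      then have "cs \<noteq> []" using cs' by auto
      then have "last cs' = p (last cs)" using cs'(4) p by blast
      moreover have "last cs \<noteq> c" using cs \<open>cs \<noteq> []\<close> by auto
      ultimately show "last cs' \<noteq> p c" using p(1) by (metis permutes_inverses(2))
    qed
    then show ?thesis using cs' pc by (simp add: tree_V_snoc)
  qed
  show ?case
  proof (intro exI[of _ "cs'@[p c]"] conjI impI allI)
    show "cs'@[p c] \<in> tree_V d" by (rule red)
    show "length (cs' @ [p c]) = length (cs @ [c])" using cs' by simp
    show eq: "g (walk x (cs @ [c])) = walk (g x) (cs' @ [p c])" using cs' p cs by simp
    fix q assume q: "q permutes {..<d} \<and> (\<forall>a<d. g (nbr (walk x (cs @ [c])) a) = nbr (g (walk x (cs @ [c]))) (q a))"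
    let ?w' = "nbr ?w c"
    have w'V: "?w' \<in> tree_V d" using wV cs nbr_in_V by auto
    have gw'V: "g ?w' \<in> tree_V d" using g w'V by (auto simp: loc_def)
    have "g (nbr ?w' c) = nbr (g ?w') (q c)" using q cs(2) by simp
    then have 1: "g ?w = nbr (g ?w') (q c)" using nbr_nbr[OF wV cs(2)] by simp
    have 2: "g ?w = nbr (g ?w') (p c)" using p cs(2) nbr_nbr[OF gw pc] by simp
    have qp: "q permutes {..<d}" using q by blast
    have "q c < d" using permutes_in_image[OF qp] cs(2) by simp
    then have "q c = p c" using nbr_inj[OF gw'V _ pc] 1 2 by metis
    then show "last (cs' @ [p c]) = q (last (cs @ [c]))" by simp
  qed
qed

lemma loc_inj:
  assumes g: "loc d g"
  shows "inj_on g (tree_V d)"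
proof (rule inj_onI)
  fix x y assume x: "x \<in> tree_V d" and y: "y \<in> tree_V d" and eq: "g x = g y"
  let ?cs = "red (rev x @ y)"
  have s: "set (rev x @ y) \<subseteq> {..<d}" using x y tree_V_set by auto
  have csV: "?cs \<in> tree_V d" using red_rd red_set[of "rev x @ y"] s by (auto simp: tree_V_rd)
  have "walk x ?cs = y" using walk_red[OF x s] by (simp add: walk_append walk_rev_self[OF x] walk_Nil_self[OF y])
  show "x = y"
  proof (rule ccontr)
    assume "x \<noteq> y"
    then have ne: "?cs \<noteq> []" using \<open>walk x ?cs = y\<close> by auto
    obtain cs' where cs': "cs' \<in> tree_V d" "length cs' = length ?cs" "g (walk x ?cs) = walk (g x) cs'"
      using loc_walk[OF g x csV] by blast
    have "g x \<in> tree_V d" using g x by (auto simp: loc_def)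
    moreover have "cs' \<noteq> []" using cs' ne by auto
    ultimately have "walk (g x) cs' \<noteq> g x" using walk_no_return cs'(1) by blast
    then show False using cs' \<open>walk x ?cs = y\<close> eq by simp
  qed
qed

lemma loc_surj:
  assumes g: "loc d g"
  shows "g ` tree_V d = tree_V d"
proof
  show "g ` tree_V d \<subseteq> tree_V d" using g by (auto simp: loc_def)
  have key: "\<forall>x\<in>tree_V d. walk (g x) cs \<in> g ` tree_V d" if "set cs \<subseteq> {..<d}" for cs
    using that
  proof (induction cs)
    case Nil then show ?case by auto
  next
    case (Cons c cs)
    show ?case
    proof
      fix x assume x: "x \<in> tree_V d"
      obtain p where p: "p permutes {..<d}" "\<forall>a<d. g (nbr x a) = nbr (g x) (p a)" using g x by (auto simp: loc_def)
      have c: "c < d" using Cons by auto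
      have ic: "inv p c < d" using permutes_in_image[OF permutes_inv[OF p(1)]] c by simp
      have "nbr (g x) c = g (nbr x (inv p c))" using p ic permutes_inverses[OF p(1)] by simp
      then show "walk (g x) (c # cs) \<in> g ` tree_V d" using Cons nbr_in_V[OF x ic] by simp
    qed
  qed
  show "tree_V d \<subseteq> g ` tree_V d"
  proof
    fix y assume y: "y \<in> tree_V d"
    have gV: "g [] \<in> tree_V d" using g by (auto simp: loc_def)
    have "walk (g []) (rev (g []) @ y) = y" by (simp add: walk_append walk_rev_self[OF gV] walk_Nil_self[OF y])
    moreover have "set (rev (g []) @ y) \<subseteq> {..<d}" using gV y tree_V_set by auto
    ultimately show "y \<in> g ` tree_V d" using key by (metis tree_V_Nil)
  qed
qed

lemma loc_Aut:
  assumes g: "loc d g" and out: "\<forall>x. x \<notin> tree_V d \<longrightarrow> g x = x"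
  shows "g \<in> Aut d"
proof -
  have bij: "bij_betw g (tree_V d) (tree_V d)" using loc_inj[OF g] loc_surj[OF g] by (simp add: bij_betw_def)
  have adj: "tree_adj d x y \<longleftrightarrow> tree_adj d (g x) (g y)" if x: "x \<in> tree_V d" and y: "y \<in> tree_V d" for x y
  proof -
    obtain p where p: "p permutes {..<d}" "\<forall>a<d. g (nbr x a) = nbr (g x) (p a)" using g x by (auto simp: loc_def)
    have gx: "g x \<in> tree_V d" using g x by (auto simp: loc_def)
    show ?thesis
    proof
      assume "tree_adj d x y"
      then obtain a where a: "a < d" "y = nbr x a" by (auto simp: adj_iff)
      then show "tree_adj d (g x) (g y)" using p gx permutes_in_image[OF p(1)] by (auto simp: adj_iff)
    next
      assume "tree_adj d (g x) (g y)"
      then obtain b where b: "b < d" "g y = nbr (g x) b" by (auto simp: adj_iff)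
      have ib: "inv p b < d" using permutes_in_image[OF permutes_inv[OF p(1)]] b by simp
      have "g y = g (nbr x (inv p b))" using p b ib permutes_inverses[OF p(1)] by simp
      then have "y = nbr x (inv p b)" using loc_inj[OF g] y nbr_in_V[OF x ib] by (auto dest: inj_onD)
      then show "tree_adj d x y" using x ib by (auto simp: adj_iff)
    qed
  qed
  show ?thesis using bij adj out by (auto simp: Aut_def)
qed


lemma Aut_V: "g \<in> Aut d \<Longrightarrow> v \<in> tree_V d \<Longrightarrow> g v \<in> tree_V d"
  by (auto simp: Aut_def bij_betw_def)

lemma Aut_out: "g \<in> Aut d \<Longrightarrow> v \<notin> tree_V d \<Longrightarrow> g v = v"
  by (auto simp: Aut_def)

lemma Aut_inj: "g \<in> Aut d \<Longrightarrow> inj_on g (tree_V d)"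
  by (auto simp: Aut_def bij_betw_def)

lemma Aut_nbr:
  assumes g: "g \<in> Aut d" and v: "v \<in> tree_V d" and a: "a < d"
  shows "g (nbr v a) = nbr (g v) (loc_perm d g v a) \<and> loc_perm d g v a < d"
proof -
  have "tree_adj d v (nbr v a)" using v a by (auto simp: adj_iff)
  moreover have "nbr v a \<in> tree_V d" using v a nbr_in_V by auto
  ultimately have "tree_adj d (g v) (g (nbr v a))" using g v by (auto simp: Aut_def)
  then obtain b where b: "b < d" "g (nbr v a) = nbr (g v) b" by (auto simp: adj_iff)
  have "loc_perm d g v a = b" using b a edge_col_nbr[OF Aut_V[OF g v] b(1)] by (simp add: loc_perm_def)
  then show ?thesis using b by simp
qed

lemma loc_perm_permutes:
  assumes g: "g \<in> Aut d" and v: "v \<in> tree_V d"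
  shows "loc_perm d g v permutes {..<d}"
proof (rule inj_imp_permutes)
  show "inj_on (loc_perm d g v) {..<d}"
  proof (rule inj_onI)
    fix a b assume a: "a \<in> {..<d}" and b: "b \<in> {..<d}" and eq: "loc_perm d g v a = loc_perm d g v b"
    have "g (nbr v a) = g (nbr v b)" using Aut_nbr[OF g v, of a] Aut_nbr[OF g v, of b] a b eq by simp
    then have "nbr v a = nbr v b" using Aut_inj[OF g] nbr_in_V[OF v] a b by (auto dest: inj_onD)
    then show "a = b" using nbr_inj[OF v] a b by auto
  qed
  show "\<And>x. x \<in> {..<d} \<Longrightarrow> loc_perm d g v x \<in> {..<d}" using Aut_nbr[OF g v] by auto
  show "\<And>x. x \<notin> {..<d} \<Longrightarrow> loc_perm d g v x = x" by (simp add: loc_perm_def)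
qed simp

lemma Aut_loc: "g \<in> Aut d \<Longrightarrow> loc d g"
  unfolding loc_def using Aut_V loc_perm_permutes Aut_nbr by blast

lemma loc_perm_unique:
  assumes g: "g \<in> Aut d" and v: "v \<in> tree_V d" and p: "p permutes {..<d}"
    and h: "\<forall>a<d. g (nbr v a) = nbr (g v) (p a)"
  shows "loc_perm d g v = p"
proof
  fix a show "loc_perm d g v a = p a"
  proof (cases "a < d")
    case True
    have "p a < d" using permutes_in_image[OF p] True by simp
    then show ?thesis using True h edge_col_nbr[OF Aut_V[OF g v]] by (simp add: loc_perm_def)
  next
    case False then show ?thesis using permutes_not_in[OF p] by (simp add: loc_perm_def)
  qed
qed

lemma Aut_comp:
  assumes g: "g \<in> Aut d" and h: "h \<in> Aut d"
  shows "g \<circ> h \<in> Aut d"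
proof (rule loc_Aut)
  show "loc d (g \<circ> h)"
    unfolding loc_def
  proof (intro conjI ballI)
    fix w assume w: "w \<in> tree_V d"
    show "(g \<circ> h) w \<in> tree_V d" using w g h by (simp add: Aut_V)
    show "\<exists>p. p permutes {..<d} \<and> (\<forall>a<d. (g \<circ> h) (nbr w a) = nbr ((g \<circ> h) w) (p a))"
    proof (intro exI[of _ "loc_perm d g (h w) \<circ> loc_perm d h w"] conjI allI impI)
      have hw: "h w \<in> tree_V d" using Aut_V[OF h w] .
      show "loc_perm d g (h w) \<circ> loc_perm d h w permutes {..<d}"
        using loc_perm_permutes[OF g hw] loc_perm_permutes[OF h w] by (rule permutes_compose[rotated])
      fix a assume a: "a < d"
      have 1: "h (nbr w a) = nbr (h w) (loc_perm d h w a)" "loc_perm d h w a < d" using Aut_nbr[OF h w a] by auto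
      show "(g \<circ> h) (nbr w a) = nbr ((g \<circ> h) w) ((loc_perm d g (h w) \<circ> loc_perm d h w) a)"
        using 1 Aut_nbr[OF g hw 1(2)] by simp
    qed
  qed
  show "\<forall>x. x \<notin> tree_V d \<longrightarrow> (g \<circ> h) x = x" using g h by (simp add: Aut_out)
qed

lemma loc_perm_comp:
  assumes g: "g \<in> Aut d" and h: "h \<in> Aut d" and w: "w \<in> tree_V d"
  shows "loc_perm d (g \<circ> h) w = loc_perm d g (h w) \<circ> loc_perm d h w"
proof (rule loc_perm_unique[OF Aut_comp[OF g h] w])
  have hw: "h w \<in> tree_V d" using Aut_V[OF h w] .
  show "loc_perm d g (h w) \<circ> loc_perm d h w permutes {..<d}"
    using loc_perm_permutes[OF g hw] loc_perm_permutes[OF h w] by (rule permutes_compose[rotated])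
  show "\<forall>a<d. (g \<circ> h) (nbr w a) = nbr ((g \<circ> h) w) ((loc_perm d g (h w) \<circ> loc_perm d h w) a)"
  proof (intro allI impI)
    fix a assume a: "a < d"
    have 1: "h (nbr w a) = nbr (h w) (loc_perm d h w a)" "loc_perm d h w a < d" using Aut_nbr[OF h w a] by auto
    show "(g \<circ> h) (nbr w a) = nbr ((g \<circ> h) w) ((loc_perm d g (h w) \<circ> loc_perm d h w) a)"
      using 1 Aut_nbr[OF g hw 1(2)] by simp
  qed
qed

lemma aut_inv_props:
  assumes g: "g \<in> Aut d" and v: "v \<in> tree_V d"
  shows "aut_inv d g v \<in> tree_V d" "g (aut_inv d g v) = v" "aut_inv d g (g v) = v"
proof -
  have b: "bij_betw g (tree_V d) (tree_V d)" using g by (auto simp: Aut_def)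
  show "aut_inv d g v \<in> tree_V d" using v b by (simp add: aut_inv_def bij_betw_def inv_into_into)
  show "g (aut_inv d g v) = v" using v b by (simp add: aut_inv_def bij_betw_def f_inv_into_f)
  show "aut_inv d g (g v) = v" using v b Aut_V[OF g v] by (simp add: aut_inv_def bij_betw_def inv_into_f_f)
qed

lemma aut_inv_out: "v \<notin> tree_V d \<Longrightarrow> aut_inv d g v = v"
  by (simp add: aut_inv_def)

lemma aut_inv_Aut:
  assumes g: "g \<in> Aut d"
  shows "aut_inv d g \<in> Aut d"
proof (rule loc_Aut)
  show "loc d (aut_inv d g)"
    unfolding loc_def
  proof (intro conjI ballI)
    fix w assume w: "w \<in> tree_V d"
    show "aut_inv d g w \<in> tree_V d" using aut_inv_props[OF g w] by simp
    let ?u = "aut_inv d g w"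
    have u: "?u \<in> tree_V d" "g ?u = w" using aut_inv_props[OF g w] by auto
    let ?p = "loc_perm d g ?u"
    have p: "?p permutes {..<d}" using loc_perm_permutes[OF g u(1)] .
    show "\<exists>p. p permutes {..<d} \<and> (\<forall>a<d. aut_inv d g (nbr w a) = nbr (aut_inv d g w) (p a))"
    proof (intro exI[of _ "inv ?p"] conjI allI impI)
      show "inv ?p permutes {..<d}" using permutes_inv[OF p] .
      fix a assume a: "a < d"
      have ia: "inv ?p a < d" using permutes_in_image[OF permutes_inv[OF p]] a by simp
      have "g (nbr ?u (inv ?p a)) = nbr w a"
        using Aut_nbr[OF g u(1) ia] u(2) permutes_inverses[OF p] by simp
      then show "aut_inv d g (nbr w a) = nbr (aut_inv d g w) (inv ?p a)"
        using aut_inv_props(3)[OF g nbr_in_V[OF u(1) ia]] by simp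
    qed
  qed
  show "\<forall>x. x \<notin> tree_V d \<longrightarrow> aut_inv d g x = x" by (simp add: aut_inv_def)
qed

lemma loc_perm_id:
  assumes v: "v \<in> tree_V d" and h: "g v = v" "\<forall>a<d. g (nbr v a) = nbr v a"
  shows "loc_perm d g v = id"
proof
  fix a show "loc_perm d g v a = id a"
    using h edge_col_nbr[OF v] by (simp add: loc_perm_def)
qed

lemma comp_aut_inv:
  assumes g: "g \<in> Aut d"
  shows "g \<circ> aut_inv d g = id" "aut_inv d g \<circ> g = id"
proof -
  show "g \<circ> aut_inv d g = id"
  proof
    fix x show "(g \<circ> aut_inv d g) x = id x"
      by (cases "x \<in> tree_V d") (auto simp: aut_inv_props[OF g] aut_inv_out Aut_out[OF g])
  qed
  show "aut_inv d g \<circ> g = id"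
  proof
    fix x show "(aut_inv d g \<circ> g) x = id x"
      by (cases "x \<in> tree_V d") (auto simp: aut_inv_props[OF g] aut_inv_out Aut_out[OF g])
  qed
qed

lemma loc_perm_idfun: "v \<in> tree_V d \<Longrightarrow> loc_perm d id v = id"
  by (rule loc_perm_id) auto

lemma loc_perm_inv:
  assumes g: "g \<in> Aut d" and w: "w \<in> tree_V d"
  shows "loc_perm d (aut_inv d g) w = inv (loc_perm d g (aut_inv d g w))"
proof -
  have u: "aut_inv d g w \<in> tree_V d" using aut_inv_props[OF g w] by simp
  have "loc_perm d g (aut_inv d g w) \<circ> loc_perm d (aut_inv d g) w = id"
    using loc_perm_comp[OF g aut_inv_Aut[OF g] w] comp_aut_inv[OF g] loc_perm_idfun[OF w] by simp
  then have "inv (loc_perm d g (aut_inv d g w)) \<circ> (loc_perm d g (aut_inv d g w) \<circ> loc_perm d (aut_inv d g) w) = inv (loc_perm d g (aut_inv d g w))"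
    by simp
  then show ?thesis using permutes_inv_o(2)[OF loc_perm_permutes[OF g u]]
    by (simp add: comp_assoc[symmetric])
qed

lemma loc_perm_consistent:
  assumes g: "g \<in> Aut d" and w: "w \<in> tree_V d" and a: "a < d"
  shows "loc_perm d g (nbr w a) a = loc_perm d g w a"
proof -
  have w': "nbr w a \<in> tree_V d" using nbr_in_V[OF w a] .
  have 1: "g (nbr w a) = nbr (g w) (loc_perm d g w a)" "loc_perm d g w a < d" using Aut_nbr[OF g w a] by auto
  have "loc_perm d g (nbr w a) a = edge_col (g (nbr w a)) (g w)"
    using a nbr_nbr[OF w a] by (simp add: loc_perm_def)
  also have "\<dots> = loc_perm d g w a" using 1 edge_col_nbr'[OF Aut_V[OF g w] 1(2)] by simp
  finally show ?thesis .
qed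

lemma Aut_eq:
  assumes g: "g \<in> Aut d" and h: "h \<in> Aut d" and r: "g [] = h []"
    and lp: "\<forall>w\<in>tree_V d. loc_perm d g w = loc_perm d h w"
  shows "g = h"
proof
  fix x show "g x = h x"
  proof (cases "x \<in> tree_V d")
    case False then show ?thesis using Aut_out[OF g False] Aut_out[OF h False] by simp
  next
    case True then show ?thesis
    proof (induction x rule: rev_induct)
      case Nil then show ?case using r by simp
    next
      case (snoc a x)
      have x: "x \<in> tree_V d" "a < d" "x \<noteq> [] \<longrightarrow> last x \<noteq> a" using snoc.prems by (auto simp: tree_V_snoc)
      have e: "nbr x a = x @ [a]" using x by (auto simp: nbr_def)
      show ?case using Aut_nbr[OF g x(1,2)] Aut_nbr[OF h x(1,2)] snoc.IH[OF x(1)] lp x(1) e by simp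
    qed
  qed
qed


fun bldr :: "nat list \<Rightarrow> (nat list \<Rightarrow> nat list \<Rightarrow> nat \<Rightarrow> nat \<Rightarrow> nat \<Rightarrow> nat) \<Rightarrow> (nat \<Rightarrow> nat) \<Rightarrow> nat list \<Rightarrow> nat list \<times> (nat \<Rightarrow> nat)" where
  "bldr r0 R p0 [] = (r0, p0)"
| "bldr r0 R p0 (a # ws) = (let x = bldr r0 R p0 ws in
      (nbr (fst x) (snd x a), R (rev ws @ [a]) (nbr (fst x) (snd x a)) a (snd x a)))"

definition bmap :: "nat \<Rightarrow> nat list \<Rightarrow> (nat list \<Rightarrow> nat list \<Rightarrow> nat \<Rightarrow> nat \<Rightarrow> nat \<Rightarrow> nat) \<Rightarrow> (nat \<Rightarrow> nat) \<Rightarrow> nat list \<Rightarrow> nat list" where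
  "bmap d r0 R p0 w = (if w \<in> tree_V d then fst (bldr r0 R p0 (rev w)) else w)"

definition bperm :: "nat list \<Rightarrow> (nat list \<Rightarrow> nat list \<Rightarrow> nat \<Rightarrow> nat \<Rightarrow> nat \<Rightarrow> nat) \<Rightarrow> (nat \<Rightarrow> nat) \<Rightarrow> nat list \<Rightarrow> nat \<Rightarrow> nat" where
  "bperm r0 R p0 w = snd (bldr r0 R p0 (rev w))"

lemma bldr_snoc: "bldr r0 R p0 (rev (w @ [a])) =
   (nbr (fst (bldr r0 R p0 (rev w))) (bperm r0 R p0 w a),
    R (w @ [a]) (nbr (fst (bldr r0 R p0 (rev w))) (bperm r0 R p0 w a)) a (bperm r0 R p0 w a))"
  by (simp add: bperm_def Let_def)

lemma bld_main:
  assumes r0: "r0 \<in> tree_V d" and Q: "Q \<subseteq> {p. p permutes {..<d}}" and p0: "p0 \<in> Q"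
    and HR: "\<And>w u a p. u \<in> tree_V d \<Longrightarrow> a < d \<Longrightarrow> p \<in> Q \<Longrightarrow> R w u a (p a) \<in> Q \<and> R w u a (p a) a = p a"
  shows "bmap d r0 R p0 \<in> Aut d" "bmap d r0 R p0 [] = r0"
    "\<And>w. w \<in> tree_V d \<Longrightarrow> loc_perm d (bmap d r0 R p0) w = bperm r0 R p0 w \<and> bperm r0 R p0 w \<in> Q"
proof -
  let ?g = "bmap d r0 R p0" and ?P = "bperm r0 R p0"
  have inv: "fst (bldr r0 R p0 (rev w)) \<in> tree_V d \<and> ?P w \<in> Q" if "w \<in> tree_V d" for w
    using that
  proof (induction w rule: rev_induct)
    case Nil then show ?case using r0 p0 by (simp add: bperm_def)
  next
    case (snoc a w)
    have w: "w \<in> tree_V d" "a < d" using snoc.prems by (auto simp: tree_V_snoc)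
    have IH: "fst (bldr r0 R p0 (rev w)) \<in> tree_V d" "?P w \<in> Q" using snoc.IH[OF w(1)] by auto
    have pa: "?P w a < d" using IH(2) Q w(2) permutes_in_image[of "?P w" "{..<d}"] by auto
    have u: "nbr (fst (bldr r0 R p0 (rev w))) (?P w a) \<in> tree_V d" using nbr_in_V[OF IH(1) pa] .
    show ?case using bldr_snoc[of r0 R p0 w a] u HR[OF u w(2) IH(2)] by (simp add: bperm_def)
  qed
  have Pperm: "?P w permutes {..<d}" if "w \<in> tree_V d" for w using inv[OF that] Q by auto
  have gV: "?g w \<in> tree_V d" if "w \<in> tree_V d" for w using inv[OF that] that by (simp add: bmap_def)
  have step: "?g (nbr w a) = nbr (?g w) (?P w a)" if w: "w \<in> tree_V d" and a: "a < d" for w a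
  proof (cases "w \<noteq> [] \<and> last w = a")
    case False
    then have e: "nbr w a = w @ [a]" by (auto simp: nbr_def)
    have "w @ [a] \<in> tree_V d" using w a False by (auto simp: tree_V_snoc)
    then show ?thesis using e w bldr_snoc[of r0 R p0 w a] by (simp add: bmap_def)
  next
    case True
    then obtain w' where w': "w = w' @ [a]" by (metis append_butlast_last_id)
    have w'V: "w' \<in> tree_V d" using w w' by (auto simp: tree_V_snoc)
    have e: "nbr w a = w'" using w' by (simp add: nbr_def)
    have pa: "?P w' a < d" using Pperm[OF w'V] a permutes_in_image[of "?P w'" "{..<d}"] by auto
    have gw: "?g w = nbr (?g w') (?P w' a)" using w w' w'V bldr_snoc[of r0 R p0 w' a] by (simp add: bmap_def)
    have Pw: "?P w = R w (?g w) a (?P w' a)" using w w' w'V bldr_snoc[of r0 R p0 w' a] by (simp add: bmap_def bperm_def)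
    have "?P w a = ?P w' a" using Pw HR[OF gV[OF w] a inv[OF w'V, THEN conjunct2]] by simp
    then show ?thesis using gw e nbr_nbr[OF gV[OF w'V] pa] by simp
  qed
  have L: "loc d ?g" unfolding loc_def using gV step Pperm by blast
  show A: "?g \<in> Aut d" by (rule loc_Aut[OF L]) (simp add: bmap_def)
  show "?g [] = r0" by (simp add: bmap_def)
  fix w assume w: "w \<in> tree_V d"
  show "loc_perm d ?g w = ?P w \<and> ?P w \<in> Q"
    using loc_perm_unique[OF A w Pperm[OF w]] step[OF w] inv[OF w] by simp
qed


lemma perm_groupD:
  assumes "perm_group A P"
  shows "\<And>p. p \<in> P \<Longrightarrow> p permutes A" "id \<in> P" "\<And>p q. p \<in> P \<Longrightarrow> q \<in> P \<Longrightarrow> p \<circ> q \<in> P"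
    "\<And>p. p \<in> P \<Longrightarrow> inv p \<in> P"
  using assms by (auto simp: perm_group_def)

locale stp =
  fixes d n :: nat and F F' :: "(nat \<Rightarrow> nat) set" and \<beta> :: "nat \<Rightarrow> (nat \<Rightarrow> nat) set"
  assumes pgF: "perm_group {..<d} F" and pgF': "perm_group {..<d} F'" and FF': "F \<subseteq> F'"
    and orb: "\<forall>f'\<in>F'. \<forall>a<d. f' a \<in> (\<lambda>f. f a) ` F"
    and n_def: "n = card (lcosets F' F)"
    and bij: "bij_betw \<beta> {..<n} (lcosets F' F)" and b0: "\<beta> 0 = F"
begin

abbreviation "\<alpha> \<equiv> coset_action n \<beta>"

lemmas F_perm = perm_groupD(1)[OF pgF] and F_id = perm_groupD(2)[OF pgF]
  and F_comp = perm_groupD(3)[OF pgF] and F_inv = perm_groupD(4)[OF pgF]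
lemmas F'_perm = perm_groupD(1)[OF pgF'] and F'_id = perm_groupD(2)[OF pgF']
  and F'_comp = perm_groupD(3)[OF pgF'] and F'_inv = perm_groupD(4)[OF pgF']

lemma coset_comp: "(\<lambda>x. f \<circ> x) ` ((\<lambda>x. g \<circ> x) ` A) = (\<lambda>x. (f \<circ> g) \<circ> x) ` A"
  by (auto simp: image_image comp_assoc)

lemma coset_F: "f \<in> F \<Longrightarrow> (\<lambda>x. f \<circ> x) ` F = F"
proof
  assume f: "f \<in> F"
  show "(\<lambda>x. f \<circ> x) ` F \<subseteq> F" using f F_comp by auto
  show "F \<subseteq> (\<lambda>x. f \<circ> x) ` F"
  proof
    fix x assume x: "x \<in> F"
    have "f \<circ> (inv f \<circ> x) = x" using permutes_inv_o(1)[OF F_perm[OF f]] by (simp add: comp_assoc[symmetric])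
    then show "x \<in> (\<lambda>x. f \<circ> x) ` F" using F_comp[OF F_inv[OF f] x] by (metis image_eqI)
  qed
qed

lemma lcosets_act: "f \<in> F' \<Longrightarrow> C \<in> lcosets F' F \<Longrightarrow> (\<lambda>x. f \<circ> x) ` C \<in> lcosets F' F"
  unfolding lcosets_def using coset_comp F'_comp by blast

lemma coset_inj: "f \<in> F' \<Longrightarrow> (\<lambda>x. f \<circ> x) ` A = (\<lambda>x. f \<circ> x) ` B \<Longrightarrow> A = B"
proof -
  assume f: "f \<in> F'" and e: "(\<lambda>x. f \<circ> x) ` A = (\<lambda>x. f \<circ> x) ` B"
  have "(\<lambda>x. inv f \<circ> x) ` ((\<lambda>x. f \<circ> x) ` A) = (\<lambda>x. inv f \<circ> x) ` ((\<lambda>x. f \<circ> x) ` B)" using e by simp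
  then show "A = B" using permutes_inv_o(2)[OF F'_perm[OF f]] by (simp add: coset_comp)
qed

lemma lcosets_finite: "finite (lcosets F' F)"
proof -
  have "F' \<subseteq> {p. p permutes {..<d}}" using F'_perm by auto
  then have "finite F'" using finite_permutations[of "{..<d}"] finite_subset by auto
  then show ?thesis unfolding lcosets_def by (simp add: setcompr_eq_image)
qed

lemma F_lcoset: "F \<in> lcosets F' F"
  unfolding lcosets_def using F'_id by (intro CollectI exI[of _ id]) auto

lemma n_pos: "0 < n"
  using n_def lcosets_finite F_lcoset card_gt_0_iff by auto

lemma beta_in: "i < n \<Longrightarrow> \<beta> i \<in> lcosets F' F"
  using bij by (auto simp: bij_betw_def)

lemma beta_inj: "i < n \<Longrightarrow> j < n \<Longrightarrow> \<beta> i = \<beta> j \<Longrightarrow> i = j"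
  using bij by (auto simp: bij_betw_def dest: inj_onD)

lemma alpha_props:
  assumes f: "f \<in> F'" and i: "i < n"
  shows "\<alpha> f i < n" "\<beta> (\<alpha> f i) = (\<lambda>x. f \<circ> x) ` \<beta> i"
proof -
  have c: "(\<lambda>x. f \<circ> x) ` \<beta> i \<in> lcosets F' F" using lcosets_act[OF f beta_in[OF i]] .
  show "\<alpha> f i < n" using c bij i by (simp add: coset_action_def bij_betw_def inv_into_into[of _ _ "{..<n}", simplified])
  show "\<beta> (\<alpha> f i) = (\<lambda>x. f \<circ> x) ` \<beta> i" using c bij i by (simp add: coset_action_def bij_betw_def f_inv_into_f)
qed

lemma alpha_out: "\<not> i < n \<Longrightarrow> \<alpha> f i = i"
  by (simp add: coset_action_def)

lemma alpha_permutes: "f \<in> F' \<Longrightarrow> \<alpha> f permutes {..<n}"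
proof (rule inj_imp_permutes)
  assume f: "f \<in> F'"
  show "inj_on (\<alpha> f) {..<n}"
  proof (rule inj_onI)
    fix i j assume ij: "i \<in> {..<n}" "j \<in> {..<n}" "\<alpha> f i = \<alpha> f j"
    then have "(\<lambda>x. f \<circ> x) ` \<beta> i = (\<lambda>x. f \<circ> x) ` \<beta> j" using alpha_props(2)[OF f] by (metis lessThan_iff)
    then have "\<beta> i = \<beta> j" by (rule coset_inj[OF f])
    then show "i = j" using beta_inj ij by simp
  qed
  show "\<And>x. x \<in> {..<n} \<Longrightarrow> \<alpha> f x \<in> {..<n}" using alpha_props[OF f] by auto
qed (auto simp: alpha_out)

lemma alpha_comp: "f \<in> F' \<Longrightarrow> g \<in> F' \<Longrightarrow> \<alpha> (f \<circ> g) = \<alpha> f \<circ> \<alpha> g"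
proof
  fix i assume f: "f \<in> F'" and g: "g \<in> F'"
  show "\<alpha> (f \<circ> g) i = (\<alpha> f \<circ> \<alpha> g) i"
  proof (cases "i < n")
    case True
    have "\<beta> (\<alpha> (f \<circ> g) i) = \<beta> (\<alpha> f (\<alpha> g i))"
      using alpha_props[OF F'_comp[OF f g] True] alpha_props[OF g True] alpha_props[OF f alpha_props(1)[OF g True]]
      by (simp add: coset_comp)
    moreover have "\<alpha> (f \<circ> g) i < n" using alpha_props(1)[OF F'_comp[OF f g] True] .
    moreover have "\<alpha> f (\<alpha> g i) < n" using alpha_props(1)[OF f alpha_props(1)[OF g True]] .
    ultimately show ?thesis using beta_inj by simp
  next
    case False then show ?thesis by (simp add: alpha_out)
  qed
qed

lemma alpha_id: "\<alpha> id = id"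
proof
  fix i show "\<alpha> id i = id i"
  proof (cases "i < n")
    case True
    have "\<beta> (\<alpha> id i) = \<beta> i" using alpha_props[OF F'_id True] by simp
    then show ?thesis using beta_inj alpha_props(1)[OF F'_id True] True by simp
  qed (simp add: alpha_out)
qed

lemma alpha_fix0: "f \<in> F' \<Longrightarrow> \<alpha> f 0 = 0 \<longleftrightarrow> f \<in> F"
proof -
  assume f: "f \<in> F'"
  have "\<alpha> f 0 = 0 \<longleftrightarrow> \<beta> (\<alpha> f 0) = \<beta> 0"
  proof
    assume "\<beta> (\<alpha> f 0) = \<beta> 0"
    then show "\<alpha> f 0 = 0" using beta_inj[OF alpha_props(1)[OF f n_pos] n_pos] by simp
  qed simp
  also have "\<dots> \<longleftrightarrow> (\<lambda>x. f \<circ> x) ` F = F" using alpha_props(2)[OF f n_pos] b0 by simp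
  also have "\<dots> \<longleftrightarrow> f \<in> F"
  proof
    assume "(\<lambda>x. f \<circ> x) ` F = F"
    moreover have "f \<circ> id \<in> (\<lambda>x. f \<circ> x) ` F" using F_id by (rule imageI)
    ultimately show "f \<in> F" by simp
  qed (rule coset_F)
  finally show ?thesis .
qed

lemma orbit_pick:
  assumes c: "c \<in> F'" and p: "p \<in> F'" and a: "a < d"
  shows "\<exists>f\<in>F. (c \<circ> f) a = p a"
proof -
  have "p a \<in> (\<lambda>f. f a) ` F" using orb p a by blast
  then obtain f1 where f1: "f1 \<in> F" "p a = f1 a" by blast
  have pa: "p a < d" using permutes_in_image[OF F'_perm[OF p]] a by simp
  have "inv c (p a) \<in> (\<lambda>f. f (p a)) ` F" using orb F'_inv[OF c] pa by blast
  then obtain f2 where f2: "f2 \<in> F" "inv c (p a) = f2 (p a)" by blast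
  have "(c \<circ> (f2 \<circ> f1)) a = c (inv c (p a))" using f1 f2 by simp
  also have "\<dots> = p a" using permutes_inverses(1)[OF F'_perm[OF c]] by simp
  finally show ?thesis using F_comp[OF f2(1) f1(1)] by blast
qed

lemma lcoset_sub: "C \<in> lcosets F' F \<Longrightarrow> C \<subseteq> F'"
  unfolding lcosets_def using FF' F'_comp by auto

lemma lcoset_of_mem: "C \<in> lcosets F' F \<Longrightarrow> f \<in> C \<Longrightarrow> (\<lambda>x. f \<circ> x) ` F = C"
proof -
  assume C: "C \<in> lcosets F' F" and f: "f \<in> C"
  then obtain c where c: "c \<in> F'" "C = (\<lambda>x. c \<circ> x) ` F" by (auto simp: lcosets_def)
  then obtain f0 where f0: "f0 \<in> F" "f = c \<circ> f0" using f by auto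
  have "(\<lambda>x. f \<circ> x) ` F = (\<lambda>x. c \<circ> x) ` ((\<lambda>x. f0 \<circ> x) ` F)" using f0 by (simp add: coset_comp)
  also have "\<dots> = C" using coset_F[OF f0(1)] c by simp
  finally show ?thesis .
qed

lemma alpha_coset0: "C \<in> lcosets F' F \<Longrightarrow> f \<in> C \<Longrightarrow> \<beta> (\<alpha> f 0) = C"
proof -
  assume C: "C \<in> lcosets F' F" and f: "f \<in> C"
  have "f \<in> F'" using lcoset_sub[OF C] f by auto
  then have "\<beta> (\<alpha> f 0) = (\<lambda>x. f \<circ> x) ` F" using alpha_props(2)[OF _ n_pos] b0 by simp
  then show ?thesis using lcoset_of_mem[OF C f] by simp
qed

lemma pick_coset:
  assumes C: "C \<in> lcosets F' F" and p: "p \<in> F'" and a: "a < d"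
  shows "\<exists>q\<in>C. q a = p a"
proof -
  obtain c where c: "c \<in> F'" "C = (\<lambda>x. c \<circ> x) ` F" using C by (auto simp: lcosets_def)
  obtain f where "f \<in> F" "(c \<circ> f) a = p a" using orbit_pick[OF c(1) p a] by blast
  then show ?thesis using c by auto
qed

end


lemma aut_inv_comp:
  assumes g: "g \<in> Aut d" and h: "h \<in> Aut d" and v: "v \<in> tree_V d"
  shows "aut_inv d (g \<circ> h) v = aut_inv d h (aut_inv d g v)"
proof -
  have gh: "g \<circ> h \<in> Aut d" using Aut_comp[OF g h] .
  have a: "aut_inv d g v \<in> tree_V d" using aut_inv_props[OF g v] by simp
  have b: "aut_inv d h (aut_inv d g v) \<in> tree_V d" using aut_inv_props[OF h a] by simp
  have "(g \<circ> h) (aut_inv d h (aut_inv d g v)) = v" using aut_inv_props[OF h a] aut_inv_props[OF g v] by simp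
  moreover have "(g \<circ> h) (aut_inv d (g \<circ> h) v) = v" using aut_inv_props[OF gh v] by simp
  ultimately show ?thesis using Aut_inj[OF gh] b aut_inv_props(1)[OF gh v] by (metis inj_onD)
qed

lemma Gnd_D:
  assumes "x \<in> Gnd n d"
  shows "snd x \<in> Aut d" "\<And>v. v \<in> tree_V d \<Longrightarrow> fst x v permutes {..<n}"
    "\<And>v. v \<notin> tree_V d \<Longrightarrow> fst x v = id" "finite {v \<in> tree_V d. fst x v 0 \<noteq> 0}"
  using assms by (auto simp: Gnd_def)

lemma Gnd_I:
  assumes "snd x \<in> Aut d" "\<And>v. v \<in> tree_V d \<Longrightarrow> fst x v permutes {..<n}"
    "\<And>v. v \<notin> tree_V d \<Longrightarrow> fst x v = id" "finite {v \<in> tree_V d. fst x v 0 \<noteq> 0}"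
  shows "x \<in> Gnd n d"
  using assms by (cases x) (auto simp: Gnd_def)

lemma Gnd0_sub: "Gnd0 n d \<subseteq> Gnd n d"
  by (auto simp: Gnd0_def)

lemma Gnd_mult_closed:
  assumes x: "x \<in> Gnd n d" and y: "y \<in> Gnd n d"
  shows "Gnd_mult d x y \<in> Gnd n d"
proof (rule Gnd_I)
  note X = Gnd_D[OF x] and Y = Gnd_D[OF y]
  show "snd (Gnd_mult d x y) \<in> Aut d" using Aut_comp[OF X(1) Y(1)] by (simp add: Gnd_mult_def)
  show "fst (Gnd_mult d x y) v permutes {..<n}" if v: "v \<in> tree_V d" for v
    using v X(2)[OF v] Y(2)[OF aut_inv_props(1)[OF X(1) v]] by (simp add: Gnd_mult_def permutes_compose)
  show "fst (Gnd_mult d x y) v = id" if "v \<notin> tree_V d" for v using that by (simp add: Gnd_mult_def)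
  have "{v \<in> tree_V d. fst (Gnd_mult d x y) v 0 \<noteq> 0} \<subseteq>
        {v \<in> tree_V d. fst x v 0 \<noteq> 0} \<union> snd x ` {u \<in> tree_V d. fst y u 0 \<noteq> 0}"
  proof
    fix v assume v: "v \<in> {v \<in> tree_V d. fst (Gnd_mult d x y) v 0 \<noteq> 0}"
    then have vV: "v \<in> tree_V d" by simp
    let ?u = "aut_inv d (snd x) v"
    have u: "?u \<in> tree_V d" "snd x ?u = v" using aut_inv_props[OF X(1) vV] by auto
    show "v \<in> {v \<in> tree_V d. fst x v 0 \<noteq> 0} \<union> snd x ` {u \<in> tree_V d. fst y u 0 \<noteq> 0}"
    proof (cases "fst y ?u 0 = 0")
      case True
      have "fst (Gnd_mult d x y) v 0 = fst x v 0" using True vV by (simp add: Gnd_mult_def)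
      then show ?thesis using v vV by simp
    next
      case False then show ?thesis using u by (metis (mono_tags, lifting) UnI2 image_eqI mem_Collect_eq)
    qed
  qed
  then show "finite {v \<in> tree_V d. fst (Gnd_mult d x y) v 0 \<noteq> 0}"
    using X(4) Y(4) by (meson finite_Un finite_imageI finite_subset)
qed

lemma Gnd_assoc:
  assumes x: "x \<in> Gnd n d" and y: "y \<in> Gnd n d" and z: "z \<in> Gnd n d"
  shows "Gnd_mult d (Gnd_mult d x y) z = Gnd_mult d x (Gnd_mult d y z)"
proof -
  note X = Gnd_D[OF x] and Y = Gnd_D[OF y]
  have "fst (Gnd_mult d (Gnd_mult d x y) z) v = fst (Gnd_mult d x (Gnd_mult d y z)) v" for v
  proof (cases "v \<in> tree_V d")
    case True
    have u: "aut_inv d (snd x) v \<in> tree_V d" using aut_inv_props[OF X(1) True] by simp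
    show ?thesis using True u aut_inv_comp[OF X(1) Y(1) True] by (simp add: Gnd_mult_def comp_assoc)
  qed (simp add: Gnd_mult_def)
  then show ?thesis by (simp add: Gnd_mult_def prod_eq_iff fun_eq_iff comp_assoc)
qed

context stp begin

abbreviation "G \<equiv> G_grp d F F'"
abbreviation "U \<equiv> U_grp d F"
abbreviation "\<phi> \<equiv> phi n d \<beta>"

lemma G_D:
  assumes "g \<in> G"
  shows "g \<in> Aut d" "\<And>v. v \<in> tree_V d \<Longrightarrow> loc_perm d g v \<in> F'" "finite {v \<in> tree_V d. loc_perm d g v \<notin> F}"
  using assms by (auto simp: G_grp_def)

lemma G_comp:
  assumes g: "g \<in> G" and h: "h \<in> G"
  shows "g \<circ> h \<in> G"
proof -
  note Gg = G_D[OF g] and Gh = G_D[OF h]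
  have A: "g \<circ> h \<in> Aut d" using Aut_comp Gg(1) Gh(1) by blast
  have lp: "loc_perm d (g \<circ> h) v = loc_perm d g (h v) \<circ> loc_perm d h v" if "v \<in> tree_V d" for v
    using loc_perm_comp[OF Gg(1) Gh(1) that] .
  have F': "loc_perm d (g \<circ> h) v \<in> F'" if v: "v \<in> tree_V d" for v
    using lp[OF v] Gg(2)[OF Aut_V[OF Gh(1) v]] Gh(2)[OF v] F'_comp by simp
  have "{v \<in> tree_V d. loc_perm d (g \<circ> h) v \<notin> F} \<subseteq>
     {v \<in> tree_V d. loc_perm d h v \<notin> F} \<union> (h -` {w \<in> tree_V d. loc_perm d g w \<notin> F} \<inter> tree_V d)"
    using lp F_comp Aut_V[OF Gh(1)] by fastforce
  moreover have "finite (h -` {w \<in> tree_V d. loc_perm d g w \<notin> F} \<inter> tree_V d)"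
    using finite_vimage_IntI[OF Gg(3) Aut_inj[OF Gh(1)]] .
  ultimately have "finite {v \<in> tree_V d. loc_perm d (g \<circ> h) v \<notin> F}"
    using Gh(3) by (meson finite_Un finite_subset)
  then show ?thesis using A F' by (simp add: G_grp_def)
qed

lemma G_inv:
  assumes g: "g \<in> G"
  shows "aut_inv d g \<in> G"
proof -
  note Gg = G_D[OF g]
  have A: "aut_inv d g \<in> Aut d" using aut_inv_Aut[OF Gg(1)] .
  have F': "loc_perm d (aut_inv d g) v \<in> F'" if v: "v \<in> tree_V d" for v
    using loc_perm_inv[OF Gg(1) v] Gg(2)[OF aut_inv_props(1)[OF Gg(1) v]] F'_inv by simp
  have "{v \<in> tree_V d. loc_perm d (aut_inv d g) v \<notin> F} \<subseteq> g ` {w \<in> tree_V d. loc_perm d g w \<notin> F}"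
  proof
    fix v assume v: "v \<in> {v \<in> tree_V d. loc_perm d (aut_inv d g) v \<notin> F}"
    then have vV: "v \<in> tree_V d" by simp
    let ?u = "aut_inv d g v"
    have u: "?u \<in> tree_V d" "g ?u = v" using aut_inv_props[OF Gg(1) vV] by auto
    have "loc_perm d g ?u \<notin> F"
    proof
      assume "loc_perm d g ?u \<in> F"
      then have "inv (loc_perm d g ?u) \<in> F" by (rule F_inv)
      then show False using v loc_perm_inv[OF Gg(1) vV] by simp
    qed
    then show "v \<in> g ` {w \<in> tree_V d. loc_perm d g w \<notin> F}" using u by (metis (mono_tags, lifting) image_eqI mem_Collect_eq)
  qed
  then have "finite {v \<in> tree_V d. loc_perm d (aut_inv d g) v \<notin> F}"
    using Gg(3) by (meson finite_imageI finite_subset)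
  then show ?thesis using A F' by (simp add: G_grp_def)
qed

lemma U_G: "U \<subseteq> G"
proof
  fix u assume "u \<in> U"
  then have h: "u \<in> Aut d" "\<forall>v\<in>tree_V d. loc_perm d u v \<in> F" by (auto simp: U_grp_def)
  then have e: "{v \<in> tree_V d. loc_perm d u v \<notin> F} = {}" by auto
  have "\<forall>v\<in>tree_V d. loc_perm d u v \<in> F'" using h FF' by auto
  moreover have "finite {v \<in> tree_V d. loc_perm d u v \<notin> F}" unfolding e by simp
  ultimately show "u \<in> G" using h(1) unfolding G_grp_def by blast
qed

lemma phi_fst: "v \<in> tree_V d \<Longrightarrow> fst (\<phi> g) v = \<alpha> (loc_perm d g (aut_inv d g v))"
  and phi_fst_out: "v \<notin> tree_V d \<Longrightarrow> fst (\<phi> g) v = id"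
  and phi_snd: "snd (\<phi> g) = g"
  by (auto simp: phi_def)

lemma phi_in_Gnd:
  assumes g: "g \<in> G"
  shows "\<phi> g \<in> Gnd n d"
proof (rule Gnd_I)
  note Gg = G_D[OF g]
  show "snd (\<phi> g) \<in> Aut d" using Gg(1) by (simp add: phi_snd)
  show "fst (\<phi> g) v permutes {..<n}" if v: "v \<in> tree_V d" for v
    using alpha_permutes[OF Gg(2)[OF aut_inv_props(1)[OF Gg(1) v]]] phi_fst[OF v] by simp
  show "fst (\<phi> g) v = id" if "v \<notin> tree_V d" for v using phi_fst_out[OF that] .
  have "{v \<in> tree_V d. fst (\<phi> g) v 0 \<noteq> 0} \<subseteq> g ` {w \<in> tree_V d. loc_perm d g w \<notin> F}"
  proof
    fix v assume v: "v \<in> {v \<in> tree_V d. fst (\<phi> g) v 0 \<noteq> 0}"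
    then have vV: "v \<in> tree_V d" by simp
    let ?u = "aut_inv d g v"
    have u: "?u \<in> tree_V d" "g ?u = v" using aut_inv_props[OF Gg(1) vV] by auto
    have "loc_perm d g ?u \<notin> F" using v phi_fst[OF vV] alpha_fix0[OF Gg(2)[OF u(1)]] by simp
    then show "v \<in> g ` {w \<in> tree_V d. loc_perm d g w \<notin> F}" using u by (metis (mono_tags, lifting) image_eqI mem_Collect_eq)
  qed
  then show "finite {v \<in> tree_V d. fst (\<phi> g) v 0 \<noteq> 0}"
    using Gg(3) by (meson finite_imageI finite_subset)
qed

lemma phi_hom:
  assumes g: "g \<in> G" and h: "h \<in> G"
  shows "\<phi> (g \<circ> h) = Gnd_mult d (\<phi> g) (\<phi> h)"
proof -
  note Gg = G_D[OF g] and Gh = G_D[OF h]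
  have "fst (\<phi> (g \<circ> h)) v = fst (Gnd_mult d (\<phi> g) (\<phi> h)) v" for v
  proof (cases "v \<in> tree_V d")
    case True
    let ?u = "aut_inv d g v"
    have u: "?u \<in> tree_V d" "g ?u = v" using aut_inv_props[OF Gg(1) True] by auto
    let ?w = "aut_inv d h ?u"
    have w: "?w \<in> tree_V d" "h ?w = ?u" using aut_inv_props[OF Gh(1) u(1)] by auto
    have "fst (\<phi> (g \<circ> h)) v = \<alpha> (loc_perm d (g \<circ> h) ?w)"
      using phi_fst[OF True] aut_inv_comp[OF Gg(1) Gh(1) True] by simp
    also have "\<dots> = \<alpha> (loc_perm d g ?u \<circ> loc_perm d h ?w)"
      using loc_perm_comp[OF Gg(1) Gh(1) w(1)] w(2) by simp
    also have "\<dots> = \<alpha> (loc_perm d g ?u) \<circ> \<alpha> (loc_perm d h ?w)"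
      using alpha_comp Gg(2)[OF u(1)] Gh(2)[OF w(1)] by simp
    also have "\<dots> = fst (Gnd_mult d (\<phi> g) (\<phi> h)) v"
      using True u(1) phi_fst[OF True] phi_fst[OF u(1)] by (simp add: Gnd_mult_def phi_snd)
    finally show ?thesis .
  next
    case False then show ?thesis by (simp add: Gnd_mult_def phi_fst_out)
  qed
  then show ?thesis by (simp add: prod_eq_iff fun_eq_iff Gnd_mult_def phi_snd)
qed

lemma phi_U_Gnd0:
  assumes u: "u \<in> U"
  shows "\<phi> u \<in> Gnd0 n d"
proof -
  have uG: "u \<in> G" using u U_G by auto
  have "fst (\<phi> u) v 0 = 0" if v: "v \<in> tree_V d" for v
  proof -
    have w: "aut_inv d u v \<in> tree_V d" using aut_inv_props[OF G_D(1)[OF uG] v] by simp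
    have "loc_perm d u (aut_inv d u v) \<in> F" using u w by (auto simp: U_grp_def)
    then show ?thesis using phi_fst[OF v] alpha_fix0 FF' by auto
  qed
  then show ?thesis using phi_in_Gnd[OF uG] by (cases "\<phi> u") (auto simp: Gnd0_def)
qed

end


lemma istop_nbhd:
  assumes mono: "\<And>x S S'. S \<subseteq> S' \<Longrightarrow> N x S' \<subseteq> N x S"
  shows "istopology (\<lambda>W. W \<subseteq> A \<and> (\<forall>x\<in>W. \<exists>S. finite S \<and> S \<subseteq> B \<and> N x S \<subseteq> W))"
proof -
  define L where "L = (\<lambda>W. W \<subseteq> A \<and> (\<forall>x\<in>W. \<exists>S. finite S \<and> S \<subseteq> B \<and> N x S \<subseteq> W))"
  have 1: "L (S \<inter> T)" if S: "L S" and T: "L T" for S T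
  proof -
    have ex: "\<exists>S'. finite S' \<and> S' \<subseteq> B \<and> N x S' \<subseteq> S \<inter> T" if x: "x \<in> S \<inter> T" for x
    proof -
      have "x \<in> S" "x \<in> T" using x by auto
      then obtain S1 S2 where S1: "finite S1" "S1 \<subseteq> B" "N x S1 \<subseteq> S" and S2: "finite S2" "S2 \<subseteq> B" "N x S2 \<subseteq> T"
        using S T unfolding L_def by meson
      have "N x (S1 \<union> S2) \<subseteq> N x S1" "N x (S1 \<union> S2) \<subseteq> N x S2" by (rule mono, simp)+
      then have "N x (S1 \<union> S2) \<subseteq> S \<inter> T" using S1(3) S2(3) by blast
      moreover have "finite (S1 \<union> S2)" "S1 \<union> S2 \<subseteq> B" using S1 S2 by auto
      ultimately show ?thesis by blast
    qed
    have "S \<inter> T \<subseteq> A" using S unfolding L_def by auto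
    then show ?thesis unfolding L_def using ex by simp
  qed
  have 2: "L (\<Union>K)" if K: "\<forall>W\<in>K. L W" for K
  proof -
    have ex: "\<exists>S. finite S \<and> S \<subseteq> B \<and> N x S \<subseteq> \<Union>K" if "x \<in> \<Union>K" for x
    proof -
      obtain W where W: "W \<in> K" "x \<in> W" using \<open>x \<in> \<Union>K\<close> by auto
      have "L W" using K W by blast
      then obtain S where "finite S" "S \<subseteq> B" "N x S \<subseteq> W" using W(2) unfolding L_def by meson
      then show ?thesis using W by blast
    qed
    have "\<Union>K \<subseteq> A" using K unfolding L_def by auto
    then show ?thesis unfolding L_def using ex by simp
  qed
  have "istopology L" unfolding istopology_def
  proof (intro conjI allI impI)
    fix S T assume "L S" "L T" then show "L (S \<inter> T)" by (rule 1)
  next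
    fix K assume "\<forall>W\<in>K. L W" then show "L (\<Union>K)" by (rule 2)
  qed
  then show ?thesis unfolding L_def .
qed

definition NG :: "nat \<Rightarrow> (nat \<Rightarrow> nat) set \<Rightarrow> (nat list \<Rightarrow> nat list) \<Rightarrow> nat list set \<Rightarrow> (nat list \<Rightarrow> nat list) set" where
  "NG d F g S = {g \<circ> u | u. u \<in> U_grp d F \<and> (\<forall>v\<in>S. u v = v)}"

definition NN :: "nat \<Rightarrow> nat \<Rightarrow> elt \<Rightarrow> nat list set \<Rightarrow> elt set" where
  "NN n d x S = {Gnd_mult d x y | y. y \<in> Gnd0 n d \<and> (\<forall>v\<in>S. fst y v = id \<and> snd y v = v)}"

lemma open_G_top: "openin (G_top d F F') W \<longleftrightarrow> W \<subseteq> G_grp d F F' \<and> (\<forall>g\<in>W. \<exists>S. finite S \<and> S \<subseteq> tree_V d \<and> NG d F g S \<subseteq> W)"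
proof -
  have "istopology (\<lambda>W. W \<subseteq> G_grp d F F' \<and> (\<forall>g\<in>W. \<exists>S. finite S \<and> S \<subseteq> tree_V d \<and> NG d F g S \<subseteq> W))"
    by (rule istop_nbhd) (auto simp: NG_def)
  then show ?thesis unfolding G_top_def NG_def[abs_def] by simp
qed

lemma open_Gnd_top: "openin (Gnd_top n d) W \<longleftrightarrow> W \<subseteq> Gnd n d \<and> (\<forall>x\<in>W. \<exists>S. finite S \<and> S \<subseteq> tree_V d \<and> NN n d x S \<subseteq> W)"
proof -
  have "istopology (\<lambda>W. W \<subseteq> Gnd n d \<and> (\<forall>x\<in>W. \<exists>S. finite S \<and> S \<subseteq> tree_V d \<and> NN n d x S \<subseteq> W))"
    by (rule istop_nbhd) (auto simp: NN_def)
  then show ?thesis unfolding Gnd_top_def NN_def[abs_def] by simp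
qed

lemma NN_sub: "x \<in> Gnd n d \<Longrightarrow> NN n d x S \<subseteq> Gnd n d"
proof
  fix z assume x: "x \<in> Gnd n d" and "z \<in> NN n d x S"
  then obtain y where "z = Gnd_mult d x y" "y \<in> Gnd0 n d" unfolding NN_def by blast
  then show "z \<in> Gnd n d" using Gnd_mult_closed[OF x] Gnd0_sub by blast
qed

lemma topspace_Gnd_top: "topspace (Gnd_top n d) = Gnd n d"
proof
  have "openin (Gnd_top n d) (Gnd n d)" unfolding open_Gnd_top
  proof (intro conjI ballI)
    fix x assume "x \<in> Gnd n d" then show "\<exists>S. finite S \<and> S \<subseteq> tree_V d \<and> NN n d x S \<subseteq> Gnd n d"
      using NN_sub by (intro exI[of _ "{}"]) auto
  qed simp
  then show "Gnd n d \<subseteq> topspace (Gnd_top n d)" by (rule openin_subset)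
  show "topspace (Gnd_top n d) \<subseteq> Gnd n d"
  proof
    fix x assume "x \<in> topspace (Gnd_top n d)"
    then obtain W where "openin (Gnd_top n d) W" "x \<in> W" unfolding topspace_def by blast
    then show "x \<in> Gnd n d" unfolding open_Gnd_top by blast
  qed
qed

lemma fix_nbrs:
  assumes h: "h \<in> Aut d" and w: "w \<in> tree_V d" and S: "{w} \<union> nbr w ` {..<d} \<subseteq> S"
    and fx: "\<forall>v\<in>S. h v = v"
  shows "h w = w" "loc_perm d h w = id"
proof -
  show hw: "h w = w" using fx S by blast
  have "\<forall>a<d. h (nbr w a) = nbr w a" using fx S by blast
  then show "loc_perm d h w = id" using loc_perm_id[of w d h] w hw by blast
qed

context stp begin

lemma topspace_G_top: "topspace (G_top d F F') = G"
proof
  have "openin (G_top d F F') G" unfolding open_G_top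
  proof (intro conjI ballI)
    fix g assume g: "g \<in> G"
    have "NG d F g {} \<subseteq> G"
    proof
      fix k assume "k \<in> NG d F g {}"
      then obtain u where "k = g \<circ> u" "u \<in> U" unfolding NG_def by blast
      then show "k \<in> G" using G_comp[OF g] U_G by blast
    qed
    then show "\<exists>S. finite S \<and> S \<subseteq> tree_V d \<and> NG d F g S \<subseteq> G" by (intro exI[of _ "{}"]) auto
  qed simp
  then show "G \<subseteq> topspace (G_top d F F')" by (rule openin_subset)
  show "topspace (G_top d F F') \<subseteq> G"
  proof
    fix x assume "x \<in> topspace (G_top d F F')"
    then obtain W where "openin (G_top d F F') W" "x \<in> W" unfolding topspace_def by blast
    then show "x \<in> G" unfolding open_G_top by blast
  qed
qed

lemma nbrs_finite: "finite S \<Longrightarrow> S \<subseteq> tree_V d \<Longrightarrow> finite (S \<union> (\<Union>v\<in>S. nbr v ` {..<d})) \<and> S \<union> (\<Union>v\<in>S. nbr v ` {..<d}) \<subseteq> tree_V d"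
proof
  assume S: "finite S" "S \<subseteq> tree_V d"
  show "finite (S \<union> (\<Union>v\<in>S. nbr v ` {..<d}))" using S(1) by (intro finite_UnI finite_UN_I) auto
  show "S \<union> (\<Union>v\<in>S. nbr v ` {..<d}) \<subseteq> tree_V d"
  proof
    fix x assume "x \<in> S \<union> (\<Union>v\<in>S. nbr v ` {..<d})"
    then show "x \<in> tree_V d" using S(2) nbr_in_V by blast
  qed
qed

theorem phi_continuous: "continuous_map (G_top d F F') (Gnd_top n d) \<phi>"
  unfolding continuous_map_def topspace_G_top topspace_Gnd_top
proof (intro conjI allI impI)
  show "\<phi> \<in> G \<rightarrow> Gnd n d" using phi_in_Gnd by auto
  fix W assume W: "openin (Gnd_top n d) W"
  show "openin (G_top d F F') {x \<in> G. \<phi> x \<in> W}"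
    unfolding open_G_top
  proof (intro conjI ballI)
    show "{x \<in> G. \<phi> x \<in> W} \<subseteq> G" by auto
    fix g assume g: "g \<in> {x \<in> G. \<phi> x \<in> W}"
    then obtain S where S: "finite S" "S \<subseteq> tree_V d" "NN n d (\<phi> g) S \<subseteq> W" using W unfolding open_Gnd_top by blast
    let ?S = "S \<union> (\<Union>v\<in>S. nbr v ` {..<d})"
    have "NG d F g ?S \<subseteq> {x \<in> G. \<phi> x \<in> W}"
    proof
      fix k assume "k \<in> NG d F g ?S"
      then obtain u where u: "k = g \<circ> u" "u \<in> U" "\<forall>v\<in>?S. u v = v" by (auto simp: NG_def)
      have uG: "u \<in> G" using u U_G by auto
      have kG: "k \<in> G" using G_comp[of g u] g uG u(1) by simp
      have "\<forall>v\<in>S. fst (\<phi> u) v = id \<and> snd (\<phi> u) v = v"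
      proof
        fix v assume v: "v \<in> S"
        have vV: "v \<in> tree_V d" using v S by auto
        have uA: "u \<in> Aut d" using G_D(1)[OF uG] .
        have sub: "{v} \<union> nbr v ` {..<d} \<subseteq> ?S" using v by blast
        have fx: "u v = v" "loc_perm d u v = id" using fix_nbrs[OF uA vV sub] u(3) by auto
        have "aut_inv d u v = v" using aut_inv_props(3)[OF uA vV] fx by simp
        then show "fst (\<phi> u) v = id \<and> snd (\<phi> u) v = v" using phi_fst[OF vV] fx alpha_id phi_snd by simp
      qed
      moreover have "\<phi> k = Gnd_mult d (\<phi> g) (\<phi> u)" using phi_hom[of g u] g uG u(1) by simp
      ultimately have "\<phi> k \<in> NN n d (\<phi> g) S" unfolding NN_def using phi_U_Gnd0[OF u(2)]
        by (intro CollectI exI[of _ "\<phi> u"]) simp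
      then have "\<phi> k \<in> W" using S(3) by blast
      then show "k \<in> {x \<in> G. \<phi> x \<in> W}" using kG by simp
    qed
    then show "\<exists>S. finite S \<and> S \<subseteq> tree_V d \<and> NG d F g S \<subseteq> {x \<in> G. \<phi> x \<in> W}"
      using nbrs_finite[OF S(1,2)] by (intro exI[of _ ?S]) simp
  qed
qed

lemma Gnd0_D: "y \<in> Gnd0 n d \<Longrightarrow> y \<in> Gnd n d \<and> (\<forall>v\<in>tree_V d. fst y v 0 = 0)"
  by (cases y) (auto simp: Gnd0_def)

theorem phi_closed: "closedin (Gnd_top n d) (\<phi> ` G)"
  unfolding closedin_def topspace_Gnd_top
proof (intro conjI)
  show "\<phi> ` G \<subseteq> Gnd n d" using phi_in_Gnd by auto
  show "openin (Gnd_top n d) (Gnd n d - \<phi> ` G)"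
    unfolding open_Gnd_top
  proof (intro conjI ballI)
    show "Gnd n d - \<phi> ` G \<subseteq> Gnd n d" by auto
    fix x assume x: "x \<in> Gnd n d - \<phi> ` G"
    obtain \<sigma> \<gamma> where xe: "x = (\<sigma>, \<gamma>)" by (cases x)
    note X = Gnd_D[OF DiffD1[OF x]]
    have \<gamma>: "\<gamma> \<in> Aut d" using X(1) xe by simp
    have key: "\<And>y g w. y \<in> Gnd0 n d \<Longrightarrow> w \<in> tree_V d \<Longrightarrow> \<forall>v\<in>{w} \<union> nbr w ` {..<d}. fst y v = id \<and> snd y v = v
        \<Longrightarrow> Gnd_mult d x y = \<phi> g \<Longrightarrow>
        g = \<gamma> \<circ> snd y \<and> snd y w = w \<and> loc_perm d g w = loc_perm d \<gamma> w \<and> aut_inv d (snd y) w = w"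
    proof -
      fix y g w assume y: "y \<in> Gnd0 n d" and w: "w \<in> tree_V d"
        and fy: "\<forall>v\<in>{w} \<union> nbr w ` {..<d}. fst y v = id \<and> snd y v = v" and e: "Gnd_mult d x y = \<phi> g"
      have hA: "snd y \<in> Aut d" using Gnd_D(1) Gnd0_D[OF y] by blast
      have "snd (Gnd_mult d x y) = snd (\<phi> g)" using e by simp
      then have ge: "g = \<gamma> \<circ> snd y" using xe by (simp add: Gnd_mult_def phi_snd)
      have fx: "snd y w = w" "loc_perm d (snd y) w = id" using fix_nbrs[OF hA w, of "{w} \<union> nbr w ` {..<d}"] fy by auto
      have "loc_perm d g w = loc_perm d \<gamma> w" using ge loc_perm_comp[OF \<gamma> hA w] fx by simp
      moreover have "aut_inv d (snd y) w = w" using aut_inv_props(3)[OF hA w] fx by simp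
      ultimately show "g = \<gamma> \<circ> snd y \<and> snd y w = w \<and> loc_perm d g w = loc_perm d \<gamma> w \<and> aut_inv d (snd y) w = w"
        using ge fx by simp
    qed
    have goal: "\<exists>S. finite S \<and> S \<subseteq> tree_V d \<and> NN n d x S \<inter> \<phi> ` G = {}"
    proof (cases "\<exists>w\<in>tree_V d. loc_perm d \<gamma> w \<notin> F'")
      case True
      then obtain w where w: "w \<in> tree_V d" "loc_perm d \<gamma> w \<notin> F'" by blast
      have "NN n d x ({w} \<union> nbr w ` {..<d}) \<inter> \<phi> ` G = {}"
      proof (rule ccontr)
        assume "NN n d x ({w} \<union> nbr w ` {..<d}) \<inter> \<phi> ` G \<noteq> {}"
        then obtain z where z: "z \<in> NN n d x ({w} \<union> nbr w ` {..<d})" "z \<in> \<phi> ` G" by blast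
        then obtain y where y: "y \<in> Gnd0 n d" "\<forall>v\<in>{w} \<union> nbr w ` {..<d}. fst y v = id \<and> snd y v = v"
          and zy: "z = Gnd_mult d x y" unfolding NN_def by blast
        obtain g where g: "g \<in> G" and zg: "z = \<phi> g" using z(2) by blast
        have e: "Gnd_mult d x y = \<phi> g" using zy zg by simp
        have "loc_perm d g w = loc_perm d \<gamma> w" using key[OF y(1) w(1) y(2) e] by blast
        then show False using G_D(2)[OF g w(1)] w(2) by simp
      qed
      then show ?thesis using w nbr_in_V by (intro exI[of _ "{w} \<union> nbr w ` {..<d}"]) auto
    next
      case F1: False
      show ?thesis
      proof (cases "\<exists>v\<in>tree_V d. \<sigma> v \<noteq> \<alpha> (loc_perm d \<gamma> (aut_inv d \<gamma> v))")
        case True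
        then obtain v where v: "v \<in> tree_V d" "\<sigma> v \<noteq> \<alpha> (loc_perm d \<gamma> (aut_inv d \<gamma> v))" by blast
        let ?w = "aut_inv d \<gamma> v"
        have w: "?w \<in> tree_V d" using aut_inv_props[OF \<gamma> v(1)] by simp
        have "NN n d x ({?w} \<union> nbr ?w ` {..<d}) \<inter> \<phi> ` G = {}"
        proof (rule ccontr)
          assume "NN n d x ({?w} \<union> nbr ?w ` {..<d}) \<inter> \<phi> ` G \<noteq> {}"
          then obtain z where z: "z \<in> NN n d x ({?w} \<union> nbr ?w ` {..<d})" "z \<in> \<phi> ` G" by blast
          then obtain y where y: "y \<in> Gnd0 n d" "\<forall>u\<in>{?w} \<union> nbr ?w ` {..<d}. fst y u = id \<and> snd y u = u"
            and zy: "z = Gnd_mult d x y" unfolding NN_def by blast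
          obtain g where g: "g \<in> G" and zg: "z = \<phi> g" using z(2) by blast
          have e: "Gnd_mult d x y = \<phi> g" using zy zg by simp
          note K = key[OF y(1) w y(2) e]
          have hA: "snd y \<in> Aut d" using Gnd_D(1) Gnd0_D[OF y(1)] by blast
          have fs: "fst (Gnd_mult d x y) v = \<sigma> v" using xe v(1) y(2) by (simp add: Gnd_mult_def)
          have gi: "g = \<gamma> \<circ> snd y" and Kl: "loc_perm d g ?w = loc_perm d \<gamma> ?w"
            and Ka: "aut_inv d (snd y) ?w = ?w" using K by blast+
          have "aut_inv d g v = ?w" unfolding gi using Ka aut_inv_comp[OF \<gamma> hA v(1)] by simp
          then have "fst (\<phi> g) v = \<alpha> (loc_perm d \<gamma> ?w)" using phi_fst[OF v(1), of g] Kl by simp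
          then show False using e v(2) fs by simp
        qed
        then show ?thesis using w nbr_in_V by (intro exI[of _ "{?w} \<union> nbr ?w ` {..<d}"]) auto
      next
        case F2: False
        have xphi: "x = \<phi> \<gamma>"
        proof -
          have "\<sigma> v = fst (\<phi> \<gamma>) v" for v
            using F2 X(3) xe phi_fst phi_fst_out by (cases "v \<in> tree_V d") auto
          then show ?thesis using xe phi_snd by (simp add: prod_eq_iff fun_eq_iff)
        qed
        have "{w \<in> tree_V d. loc_perm d \<gamma> w \<notin> F} \<subseteq> \<gamma> -` {v \<in> tree_V d. \<sigma> v 0 \<noteq> 0} \<inter> tree_V d"
        proof
          fix w assume w: "w \<in> {w \<in> tree_V d. loc_perm d \<gamma> w \<notin> F}"
          then have wV: "w \<in> tree_V d" by simp
          have gw: "\<gamma> w \<in> tree_V d" "aut_inv d \<gamma> (\<gamma> w) = w" using Aut_V[OF \<gamma> wV] aut_inv_props(3)[OF \<gamma> wV] by auto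
          have "\<sigma> (\<gamma> w) = \<alpha> (loc_perm d \<gamma> w)" using F2 gw by auto
          then have "\<sigma> (\<gamma> w) 0 \<noteq> 0" using alpha_fix0 F1 w by auto
          then show "w \<in> \<gamma> -` {v \<in> tree_V d. \<sigma> v 0 \<noteq> 0} \<inter> tree_V d" using gw wV by simp
        qed
        moreover have "finite (\<gamma> -` {v \<in> tree_V d. \<sigma> v 0 \<noteq> 0} \<inter> tree_V d)"
        proof -
          have "finite {v \<in> tree_V d. \<sigma> v 0 \<noteq> 0}" using X(4) xe by simp
          then show ?thesis by (rule finite_vimage_IntI[OF _ Aut_inj[OF \<gamma>]])
        qed
        ultimately have "finite {w \<in> tree_V d. loc_perm d \<gamma> w \<notin> F}" by (rule finite_subset)
        then have "\<gamma> \<in> G" using \<gamma> F1 by (simp add: G_grp_def)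
        then show ?thesis using xphi x by auto
      qed
    qed
    then obtain S where S: "finite S" "S \<subseteq> tree_V d" "NN n d x S \<inter> \<phi> ` G = {}" by blast
    then have "NN n d x S \<subseteq> Gnd n d - \<phi> ` G" using NN_sub x by blast
    then show "\<exists>S. finite S \<and> S \<subseteq> tree_V d \<and> NN n d x S \<subseteq> Gnd n d - \<phi> ` G" using S by blast
  qed
qed

end


lemma quotient_exists: "\<exists>Q. quotient_map X Q q"
proof -
  define Qp where "Qp = (\<lambda>U. U \<subseteq> q ` topspace X \<and> openin X {x \<in> topspace X. q x \<in> U})"
  have ist: "istopology Qp" unfolding istopology_def
  proof (intro conjI allI impI)
    fix S T assume S: "Qp S" and T: "Qp T"
    have "{x \<in> topspace X. q x \<in> S \<inter> T} = {x \<in> topspace X. q x \<in> S} \<inter> {x \<in> topspace X. q x \<in> T}" by auto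
    then show "Qp (S \<inter> T)" using S T unfolding Qp_def by (auto intro: openin_Int)
  next
    fix K assume K: "\<forall>U\<in>K. Qp U"
    have "{x \<in> topspace X. q x \<in> \<Union>K} = \<Union>((\<lambda>U. {x \<in> topspace X. q x \<in> U}) ` K)" by auto
    moreover have "openin X (\<Union>((\<lambda>U. {x \<in> topspace X. q x \<in> U}) ` K))" using K unfolding Qp_def by (auto intro: openin_Union)
    ultimately show "Qp (\<Union>K)" using K unfolding Qp_def by auto
  qed
  have op: "openin (topology Qp) = Qp" using topology_inverse'[OF ist] .
  have ts: "topspace (topology Qp) = q ` topspace X"
  proof
    show "topspace (topology Qp) \<subseteq> q ` topspace X"
    proof
      fix y assume "y \<in> topspace (topology Qp)"
      then obtain U where "openin (topology Qp) U" "y \<in> U" unfolding topspace_def[of "topology Qp"] by blast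
      then have "Qp U" using op by simp
      then show "y \<in> q ` topspace X" using \<open>y \<in> U\<close> unfolding Qp_def by blast
    qed
    have "{x \<in> topspace X. q x \<in> q ` topspace X} = topspace X" by auto
    then have "Qp (q ` topspace X)" unfolding Qp_def by simp
    then show "q ` topspace X \<subseteq> topspace (topology Qp)" using openin_subset op by metis
  qed
  have "quotient_map X (topology Qp) q" unfolding quotient_map_def ts op by (auto simp: Qp_def)
  then show ?thesis by blast
qed

lemma cocompactI:
  assumes C: "compactin X C" and cover: "\<And>x. x \<in> topspace X \<Longrightarrow> \<exists>c\<in>C. m x ` H = m c ` H"
  shows "cocompact X m H"
proof -
  obtain Q where Q: "quotient_map X Q (\<lambda>x. m x ` H)" using quotient_exists by blast
  have CX: "C \<subseteq> topspace X" using C by (simp add: compactin_def)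
  have "topspace Q = (\<lambda>x. m x ` H) ` topspace X" using Q by (simp add: quotient_map_def)
  also have "\<dots> = (\<lambda>x. m x ` H) ` C" using cover CX by (auto simp: image_iff)
  finally have ts: "topspace Q = (\<lambda>x. m x ` H) ` C" .
  have "compactin Q ((\<lambda>x. m x ` H) ` C)" using image_compactin[OF C quotient_imp_continuous_map[OF Q]] .
  then have "compact_space Q" unfolding compact_space_def ts .
  then show ?thesis unfolding cocompact_def using Q by blast
qed

lemma bperm_snoc: "bperm r0 R p0 (w @ [a]) = R (w @ [a]) (nbr (fst (bldr r0 R p0 (rev w))) (bperm r0 R p0 w a)) a (bperm r0 R p0 w a)"
  using bldr_snoc[of r0 R p0 w a] by (simp add: bperm_def)

lemma bldr_cong:
  assumes "\<forall>k\<le>length w. R1 (take k w) = R2 (take k w)"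
  shows "bldr r0 R1 p0 (rev w) = bldr r0 R2 p0 (rev w)"
  using assms
proof (induction w rule: rev_induct)
  case Nil then show ?case by simp
next
  case (snoc a w)
  have "\<forall>k\<le>length w. R1 (take k w) = R2 (take k w)"
  proof (intro allI impI)
    fix k assume k: "k \<le> length w"
    then have "take k w = take k (w @ [a])" by simp
    moreover have "R1 (take k (w @ [a])) = R2 (take k (w @ [a]))" using snoc.prems[rule_format, of k] k by simp
    ultimately show "R1 (take k w) = R2 (take k w)" by simp
  qed
  then have IH: "bldr r0 R1 p0 (rev w) = bldr r0 R2 p0 (rev w)" by (rule snoc.IH)
  have "R1 (w @ [a]) = R2 (w @ [a])" using snoc.prems[rule_format, of "length (w@[a])"] by simp
  then show ?case using IH bldr_snoc[of r0 R1 p0 w a] bldr_snoc[of r0 R2 p0 w a] by (simp add: bperm_def)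
qed

lemma bld_inv:
  assumes r0: "r0 \<in> tree_V d" and Q: "Q \<subseteq> {p. p permutes {..<d}}" and p0: "p0 \<in> Q"
    and HR: "\<And>w u a p. u \<in> tree_V d \<Longrightarrow> a < d \<Longrightarrow> p \<in> Q \<Longrightarrow> R w u a (p a) \<in> Q \<and> R w u a (p a) a = p a"
    and I0: "I r0 p0" and HI: "\<And>w u a p. u \<in> tree_V d \<Longrightarrow> a < d \<Longrightarrow> p \<in> Q \<Longrightarrow> I u (R w u a (p a))"
  shows "w \<in> tree_V d \<Longrightarrow> I (bmap d r0 R p0 w) (bperm r0 R p0 w)"
proof (induction w rule: rev_induct)
  case Nil then show ?case using I0 by (simp add: bmap_def bperm_def)
next
  case (snoc a w)
  have w: "w \<in> tree_V d" "a < d" using snoc.prems by (auto simp: tree_V_snoc)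
  have MA: "bmap d r0 R p0 \<in> Aut d" using bld_main(1)[OF r0 Q p0, of R] HR by blast
  have Pw: "bperm r0 R p0 w \<in> Q" using bld_main(3)[OF r0 Q p0, of R w] HR w(1) by blast
  have u: "bmap d r0 R p0 (w @ [a]) \<in> tree_V d" using Aut_V[OF MA snoc.prems] .
  have "bmap d r0 R p0 (w @ [a]) = nbr (fst (bldr r0 R p0 (rev w))) (bperm r0 R p0 w a)"
    using snoc.prems bldr_snoc[of r0 R p0 w a] by (simp add: bmap_def)
  then show ?case using bperm_snoc[of r0 R p0 w a] HI[OF u w(2) Pw] by simp
qed


definition PP :: "nat \<Rightarrow> nat \<Rightarrow> ((nat\<Rightarrow>nat) \<times> (nat\<Rightarrow>nat)) set" where
  "PP n d = {(s,q). s permutes {..<n} \<and> s 0 = 0 \<and> q permutes {..<d}}"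

definition Rth :: "nat \<Rightarrow> (nat list \<Rightarrow> (nat\<Rightarrow>nat) \<times> (nat\<Rightarrow>nat)) \<Rightarrow> nat list \<Rightarrow> nat list \<Rightarrow> nat \<Rightarrow> nat \<Rightarrow> nat \<Rightarrow> nat" where
  "Rth d z w u a b = (if snd (z w) permutes {..<d} then Transposition.transpose (snd (z w) a) b \<circ> snd (z w) else Transposition.transpose a b)"

definition Th :: "nat \<Rightarrow> (nat list \<Rightarrow> (nat\<Rightarrow>nat) \<times> (nat\<Rightarrow>nat)) \<Rightarrow> elt" where
  "Th d z = ((\<lambda>v. if v \<in> tree_V d then fst (z v) else id), bmap d [] (Rth d z) (snd (z [])))"

abbreviation "PS n d \<equiv> product_topology (\<lambda>_. discrete_topology (PP n d)) (tree_V d)"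

lemma Rth_HR:
  assumes a: "a < d" and p: "p \<in> {p. p permutes {..<d}}"
  shows "Rth d z w u a (p a) \<in> {p. p permutes {..<d}} \<and> Rth d z w u a (p a) a = p a"
proof -
  have pa: "p a < d" using permutes_in_image[of p "{..<d}" a] p a by simp
  show ?thesis
  proof (cases "snd (z w) permutes {..<d}")
    case True
    have qa: "snd (z w) a < d" using permutes_in_image[OF True] a by simp
    have "Transposition.transpose (snd (z w) a) (p a) \<circ> snd (z w) permutes {..<d}"
      using permutes_compose[OF True permutes_swap_id[of "snd (z w) a" "{..<d}" "p a"]] qa pa by simp
    then show ?thesis using True by (simp add: Rth_def)
  next
    case False
    have "Transposition.transpose a (p a) permutes {..<d}" using permutes_swap_id[of a "{..<d}" "p a"] a pa by simp
    then show ?thesis using False by (simp add: Rth_def)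
  qed
qed

lemma PiE_PP: "z \<in> (\<Pi>\<^sub>E v\<in>tree_V d. PP n d) \<Longrightarrow> v \<in> tree_V d \<Longrightarrow> fst (z v) permutes {..<n} \<and> fst (z v) 0 = 0 \<and> snd (z v) permutes {..<d}"
  by (cases "z v") (auto simp: PP_def dest: PiE_mem)

lemma Th_main:
  assumes z: "z \<in> (\<Pi>\<^sub>E v\<in>tree_V d. PP n d)"
  shows "snd (Th d z) \<in> Aut d" "snd (Th d z) [] = []"
    "\<And>w. w \<in> tree_V d \<Longrightarrow> loc_perm d (snd (Th d z)) w = bperm [] (Rth d z) (snd (z [])) w"
proof -
  have p0: "snd (z []) \<in> {p. p permutes {..<d}}" using PiE_PP[OF z tree_V_Nil] by simp
  note M = bld_main[of "[]" d "{p. p permutes {..<d}}" "snd (z [])" "Rth d z", OF tree_V_Nil subset_refl p0]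
  have HR: "\<And>w u a p. u \<in> tree_V d \<Longrightarrow> a < d \<Longrightarrow> p \<in> {p. p permutes {..<d}} \<Longrightarrow>
       Rth d z w u a (p a) \<in> {p. p permutes {..<d}} \<and> Rth d z w u a (p a) a = p a"
    using Rth_HR by blast
  have A: "bmap d [] (Rth d z) (snd (z [])) \<in> Aut d" by (rule M(1)) (use HR in blast)
  have B: "bmap d [] (Rth d z) (snd (z [])) [] = []" by (rule M(2)) (use HR in blast)
  show "snd (Th d z) \<in> Aut d" using A by (simp add: Th_def)
  show "snd (Th d z) [] = []" using B by (simp add: Th_def)
  fix w assume w: "w \<in> tree_V d"
  have "loc_perm d (bmap d [] (Rth d z) (snd (z []))) w = bperm [] (Rth d z) (snd (z [])) w \<and>
    bperm [] (Rth d z) (snd (z [])) w \<in> {p. p permutes {..<d}}" by (rule M(3)) (use HR w in blast)+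
  then show "loc_perm d (snd (Th d z)) w = bperm [] (Rth d z) (snd (z [])) w" by (simp add: Th_def)
qed

lemma Th_Gnd0:
  assumes z: "z \<in> (\<Pi>\<^sub>E v\<in>tree_V d. PP n d)"
  shows "Th d z \<in> Gnd0 n d"
proof -
  have "Th d z \<in> Gnd n d"
  proof (rule Gnd_I)
    show "snd (Th d z) \<in> Aut d" using Th_main(1)[OF z] .
    show "fst (Th d z) v permutes {..<n}" if "v \<in> tree_V d" for v using PiE_PP[OF z that] that by (simp add: Th_def)
    show "fst (Th d z) v = id" if "v \<notin> tree_V d" for v using that by (simp add: Th_def)
    have e: "{v \<in> tree_V d. fst (Th d z) v 0 \<noteq> 0} = {}" using PiE_PP[OF z] by (auto simp: Th_def)
    show "finite {v \<in> tree_V d. fst (Th d z) v 0 \<noteq> 0}" unfolding e by simp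
  qed
  moreover have "\<forall>v\<in>tree_V d. fst (Th d z) v 0 = 0" using PiE_PP[OF z] by (auto simp: Th_def)
  ultimately show ?thesis by (cases "Th d z") (auto simp: Gnd0_def)
qed

lemma Th_agree:
  assumes s: "s \<in> tree_V d" and ag: "\<forall>k\<le>length s. z (take k s) = z0 (take k s)"
  shows "snd (Th d z) s = snd (Th d z0) s"
proof -
  have R: "\<forall>k\<le>length s. Rth d z (take k s) = Rth d z0 (take k s)"
    using ag by (auto simp: Rth_def fun_eq_iff)
  have p: "snd (z []) = snd (z0 [])" using ag[rule_format, of 0] by simp
  have "bldr [] (Rth d z) (snd (z [])) (rev s) = bldr [] (Rth d z0) (snd (z [])) (rev s)"
    by (rule bldr_cong[OF R])
  then show ?thesis using s p by (simp add: Th_def bmap_def)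
qed

lemma PP_finite: "finite (PP n d)"
proof -
  have "PP n d \<subseteq> {s. s permutes {..<n}} \<times> {q. q permutes {..<d}}" by (auto simp: PP_def)
  moreover have "finite ({s. s permutes {..<n}} \<times> {q. q permutes {..<d}})"
    using finite_permutations[of "{..<n}"] finite_permutations[of "{..<d}"] by simp
  ultimately show ?thesis by (rule finite_subset)
qed

lemma PS_compact: "compact_space (PS n d)"
  using PP_finite compact_space_discrete_topology compact_space_product_topology by blast


lemma inv_fix0: "s permutes A \<Longrightarrow> s 0 = 0 \<Longrightarrow> inv s 0 = 0"
  using permutes_inv_eq by metis

lemma Th_cont: "continuous_map (PS n d) (Gnd_top n d) (Th d)"
  unfolding continuous_map_def topspace_Gnd_top topspace_product_topology topspace_discrete_topology
proof (intro conjI allI impI)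
  show "Th d \<in> (\<Pi>\<^sub>E v\<in>tree_V d. PP n d) \<rightarrow> Gnd n d" using Th_Gnd0 Gnd0_sub by blast
  fix W assume W: "openin (Gnd_top n d) W"
  show "openin (PS n d) {x \<in> \<Pi>\<^sub>E v\<in>tree_V d. PP n d. Th d x \<in> W}"
    unfolding openin_product_topology_alt topspace_discrete_topology openin_discrete_topology
  proof (intro ballI)
    fix z0 assume "z0 \<in> {x \<in> \<Pi>\<^sub>E v\<in>tree_V d. PP n d. Th d x \<in> W}"
    then have z0: "z0 \<in> (\<Pi>\<^sub>E v\<in>tree_V d. PP n d)" "Th d z0 \<in> W" by auto
    obtain S where S: "finite S" "S \<subseteq> tree_V d" "NN n d (Th d z0) S \<subseteq> W" using W z0(2) unfolding open_Gnd_top by blast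
    define h0 where "h0 = snd (Th d z0)"
    have h0A: "h0 \<in> Aut d" using Th_main(1)[OF z0(1)] h0_def by simp
    define J where "J = h0 ` S \<union> (\<Union>s\<in>S. (\<lambda>k. take k s) ` {..length s})"
    have Jfin: "finite J" unfolding J_def using S(1) by (intro finite_UnI finite_UN_I finite_imageI) auto
    define U where "U = (\<lambda>i. if i \<in> J then {z0 i} else PP n d)"
    show "\<exists>U. finite {i \<in> tree_V d. U i \<noteq> PP n d} \<and> (\<forall>i\<in>tree_V d. U i \<subseteq> PP n d) \<and>
              z0 \<in> Pi\<^sub>E (tree_V d) U \<and> Pi\<^sub>E (tree_V d) U \<subseteq> {x \<in> \<Pi>\<^sub>E v\<in>tree_V d. PP n d. Th d x \<in> W}"
    proof (intro exI[of _ U] conjI)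
      have "{i \<in> tree_V d. U i \<noteq> PP n d} \<subseteq> J" unfolding U_def by auto
      then show "finite {i \<in> tree_V d. U i \<noteq> PP n d}" using Jfin finite_subset by blast
      show sub: "\<forall>i\<in>tree_V d. U i \<subseteq> PP n d" unfolding U_def using z0(1) by (auto dest: PiE_mem)
      show "z0 \<in> Pi\<^sub>E (tree_V d) U" using z0(1) unfolding U_def PiE_iff by auto
      show "Pi\<^sub>E (tree_V d) U \<subseteq> {x \<in> \<Pi>\<^sub>E v\<in>tree_V d. PP n d. Th d x \<in> W}"
      proof
        fix z assume zU: "z \<in> Pi\<^sub>E (tree_V d) U"
        have z: "z \<in> (\<Pi>\<^sub>E v\<in>tree_V d. PP n d)" using zU sub by (auto simp: PiE_iff)
        have zJ: "z i = z0 i" if "i \<in> J" "i \<in> tree_V d" for i using zU that unfolding U_def by (auto dest: PiE_mem)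
        define h where "h = snd (Th d z)"
        have hA: "h \<in> Aut d" using Th_main(1)[OF z] h_def by simp
        define y where "y = ((\<lambda>u. if u \<in> tree_V d then inv (fst (z0 (h0 u))) \<circ> fst (z (h0 u)) else id), aut_inv d h0 \<circ> h)"
        have eq: "Th d z = Gnd_mult d (Th d z0) y"
        proof -
          have "fst (Th d z) v = fst (Gnd_mult d (Th d z0) y) v" for v
          proof (cases "v \<in> tree_V d")
            case True
            have u: "aut_inv d h0 v \<in> tree_V d" "h0 (aut_inv d h0 v) = v" using aut_inv_props[OF h0A True] by auto
            have "fst (z0 v) \<circ> (inv (fst (z0 v)) \<circ> fst (z v)) = fst (z v)"
              using permutes_inv_o(1)[of "fst (z0 v)" "{..<n}"] PiE_PP[OF z0(1) True] by (simp add: comp_assoc[symmetric])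
            moreover have "fst (Th d z0) v = fst (z0 v)" "fst (Th d z) v = fst (z v)" using True by (simp_all add: Th_def)
            moreover have "fst (Gnd_mult d (Th d z0) y) v = fst (Th d z0) v \<circ> fst y (aut_inv d h0 v)"
              using True by (simp add: Gnd_mult_def h0_def)
            moreover have "fst y (aut_inv d h0 v) = inv (fst (z0 v)) \<circ> fst (z v)" using u by (simp add: y_def)
            ultimately show ?thesis by simp
          qed (simp add: Th_def Gnd_mult_def)
          moreover have "snd (Th d z) = snd (Gnd_mult d (Th d z0) y)"
            using comp_aut_inv(1)[OF h0A] by (simp add: Gnd_mult_def y_def h_def h0_def[symmetric] comp_assoc[symmetric])
          ultimately show ?thesis by (simp add: prod_eq_iff fun_eq_iff)
        qed
        have fy0: "fst y v 0 = 0" if v: "v \<in> tree_V d" for v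
        proof -
          have hv: "h0 v \<in> tree_V d" using Aut_V[OF h0A v] .
          show ?thesis using v PiE_PP[OF z hv] PiE_PP[OF z0(1) hv] inv_fix0[of "fst (z0 (h0 v))" "{..<n}"] by (simp add: y_def)
        qed
        have yG: "y \<in> Gnd n d"
        proof (rule Gnd_I)
          show "snd y \<in> Aut d" using Aut_comp[OF aut_inv_Aut[OF h0A] hA] by (simp add: y_def)
          show "fst y v permutes {..<n}" if v: "v \<in> tree_V d" for v
          proof -
            have hv: "h0 v \<in> tree_V d" using Aut_V[OF h0A v] .
            show ?thesis using v PiE_PP[OF z hv] PiE_PP[OF z0(1) hv]
              by (simp add: y_def permutes_compose permutes_inv)
          qed
          show "fst y v = id" if "v \<notin> tree_V d" for v using that by (simp add: y_def)
          have e: "{v \<in> tree_V d. fst y v 0 \<noteq> 0} = {}" using fy0 by auto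
          show "finite {v \<in> tree_V d. fst y v 0 \<noteq> 0}" unfolding e by simp
        qed
        have y0: "y \<in> Gnd0 n d" using yG fy0 by (cases y) (auto simp: Gnd0_def)
        have fixS: "fst y v = id \<and> snd y v = v" if v: "v \<in> S" for v
        proof -
          have vV: "v \<in> tree_V d" using v S(2) by auto
          have hv: "h0 v \<in> tree_V d" using Aut_V[OF h0A vV] .
          have "h0 v \<in> J" using v unfolding J_def by auto
          then have zh: "z (h0 v) = z0 (h0 v)" using zJ hv by simp
          have f: "fst y v = id" using zh vV permutes_inv_o(2)[of "fst (z0 (h0 v))" "{..<n}"] PiE_PP[OF z0(1) hv]
            by (simp add: y_def)
          have ag: "\<forall>k\<le>length v. z (take k v) = z0 (take k v)"
          proof (intro allI impI)
            fix k assume k: "k \<le> length v"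
            have "take k v \<in> J" using v k unfolding J_def by auto
            moreover have "take k v \<in> tree_V d" using tree_V_prefix[of "take k v" "drop k v"] vV by simp
            ultimately show "z (take k v) = z0 (take k v)" using zJ by simp
          qed
          have "h v = h0 v" using Th_agree[OF vV ag] h_def h0_def by simp
          then have "snd y v = v" using aut_inv_props(3)[OF h0A vV] by (simp add: y_def)
          then show ?thesis using f by simp
        qed
        have "Th d z \<in> NN n d (Th d z0) S" unfolding NN_def using eq y0 fixS by blast
        then show "z \<in> {x \<in> \<Pi>\<^sub>E v\<in>tree_V d. PP n d. Th d x \<in> W}" using S(3) z by blast
      qed
    qed
  qed
qed


context stp begin

lemma cover:
  assumes x: "x \<in> Gnd n d"
  shows "\<exists>c \<in> Th d ` (\<Pi>\<^sub>E v\<in>tree_V d. PP n d). Gnd_mult d x ` (\<phi> ` G) = Gnd_mult d c ` (\<phi> ` G)"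
proof -
  obtain \<sigma> \<gamma> where xe: "x = (\<sigma>, \<gamma>)" by (cases x)
  note X = Gnd_D[OF x]
  have \<gamma>: "\<gamma> \<in> Aut d" using X(1) xe by simp
  have \<sigma>: "\<And>v. v \<in> tree_V d \<Longrightarrow> \<sigma> v permutes {..<n}" using X(2) xe by simp
  define C where "C = (\<lambda>u. \<beta> (inv (\<sigma> (\<gamma> u)) 0))"
  have C_in: "C u \<in> lcosets F' F" if u: "u \<in> tree_V d" for u
  proof -
    have "\<gamma> u \<in> tree_V d" using Aut_V[OF \<gamma> u] .
    then have "inv (\<sigma> (\<gamma> u)) 0 < n" using permutes_in_image[OF permutes_inv[OF \<sigma>]] n_pos by simp
    then show ?thesis unfolding C_def by (rule beta_in)
  qed
  define r0 where "r0 = aut_inv d \<gamma> []"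
  have r0: "r0 \<in> tree_V d" "\<gamma> r0 = []" using aut_inv_props[OF \<gamma> tree_V_Nil] r0_def by auto
  define Rg where "Rg = (\<lambda>(w::nat list) u (a::nat) b. SOME q. q \<in> C u \<and> q a = b)"
  define p0 where "p0 = (SOME q. q \<in> C r0)"
  have QF': "F' \<subseteq> {p. p permutes {..<d}}" using F'_perm by auto
  have HR: "\<And>w u a p. u \<in> tree_V d \<Longrightarrow> a < d \<Longrightarrow> p \<in> F' \<Longrightarrow> Rg w u a (p a) \<in> F' \<and> Rg w u a (p a) a = p a"
    and HI: "\<And>w u a p. u \<in> tree_V d \<Longrightarrow> a < d \<Longrightarrow> p \<in> F' \<Longrightarrow> Rg w u a (p a) \<in> C u"
  proof -
    fix w u a p assume u: "u \<in> tree_V d" and a: "a < d" and p: "p \<in> F'"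
    have "\<exists>q. q \<in> C u \<and> q a = p a" using pick_coset[OF C_in[OF u] p a] by blast
    then have "Rg w u a (p a) \<in> C u \<and> Rg w u a (p a) a = p a" unfolding Rg_def by (rule someI_ex)
    then show "Rg w u a (p a) \<in> F' \<and> Rg w u a (p a) a = p a" "Rg w u a (p a) \<in> C u"
      using lcoset_sub[OF C_in[OF u]] by auto
  qed
  have p0C: "p0 \<in> C r0"
  proof -
    obtain c where "c \<in> F'" "C r0 = (\<lambda>x. c \<circ> x) ` F" using C_in[OF r0(1)] by (auto simp: lcosets_def)
    then have "\<exists>q. q \<in> C r0" using F_id by auto
    then show ?thesis unfolding p0_def by (rule someI_ex)
  qed
  have p0: "p0 \<in> F'" using p0C lcoset_sub[OF C_in[OF r0(1)]] by auto
  define g where "g = bmap d r0 Rg p0"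
  note M = bld_main[of r0 d F' p0 Rg, OF r0(1) QF' p0]
  have gA: "g \<in> Aut d" unfolding g_def by (rule M(1)) (use HR in blast)
  have g0: "g [] = r0" unfolding g_def by (rule M(2)) (use HR in blast)
  have glp: "loc_perm d g w = bperm r0 Rg p0 w \<and> bperm r0 Rg p0 w \<in> F'" if w: "w \<in> tree_V d" for w
    unfolding g_def by (rule M(3)) (use HR w in blast)+
  have gC: "bperm r0 Rg p0 w \<in> C (g w)" if w: "w \<in> tree_V d" for w
    unfolding g_def
    by (rule bld_inv[of r0 d F' p0 Rg "\<lambda>u q. q \<in> C u", OF r0(1) QF' p0 _ p0C _ w]) (use HR HI in blast)+
  have gG: "g \<in> G"
  proof -
    have "{w \<in> tree_V d. loc_perm d g w \<notin> F} \<subseteq> (\<gamma> \<circ> g) -` {v \<in> tree_V d. \<sigma> v 0 \<noteq> 0} \<inter> tree_V d"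
    proof
      fix w assume w: "w \<in> {w \<in> tree_V d. loc_perm d g w \<notin> F}"
      then have wV: "w \<in> tree_V d" by simp
      have vV: "\<gamma> (g w) \<in> tree_V d" using Aut_V[OF \<gamma> Aut_V[OF gA wV]] .
      have "\<sigma> (\<gamma> (g w)) 0 \<noteq> 0"
      proof
        assume "\<sigma> (\<gamma> (g w)) 0 = 0"
        then have "inv (\<sigma> (\<gamma> (g w))) 0 = 0" using inv_fix0 \<sigma>[OF vV] by blast
        then have "C (g w) = F" using b0 by (simp add: C_def)
        then show False using gC[OF wV] glp[OF wV] w by simp
      qed
      then show "w \<in> (\<gamma> \<circ> g) -` {v \<in> tree_V d. \<sigma> v 0 \<noteq> 0} \<inter> tree_V d" using vV wV by simp
    qed
    moreover have "finite ((\<gamma> \<circ> g) -` {v \<in> tree_V d. \<sigma> v 0 \<noteq> 0} \<inter> tree_V d)"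
    proof -
      have "finite {v \<in> tree_V d. \<sigma> v 0 \<noteq> 0}" using X(4) xe by simp
      then show ?thesis by (rule finite_vimage_IntI[OF _ Aut_inj[OF Aut_comp[OF \<gamma> gA]]])
    qed
    ultimately have "finite {w \<in> tree_V d. loc_perm d g w \<notin> F}" by (rule finite_subset)
    moreover have "\<forall>v\<in>tree_V d. loc_perm d g v \<in> F'" using glp by simp
    ultimately show ?thesis using gA by (simp add: G_grp_def)
  qed
  define c where "c = Gnd_mult d x (\<phi> g)"
  have cG: "c \<in> Gnd n d" unfolding c_def using Gnd_mult_closed[OF x phi_in_Gnd[OF gG]] .
  note CD = Gnd_D[OF cG]
  have csnd: "snd c = \<gamma> \<circ> g" by (simp add: c_def Gnd_mult_def xe phi_snd)
  have fc0: "fst c v 0 = 0" if v: "v \<in> tree_V d" for v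
  proof -
    let ?w = "aut_inv d \<gamma> v"
    have w: "?w \<in> tree_V d" "\<gamma> ?w = v" using aut_inv_props[OF \<gamma> v] by auto
    let ?u = "aut_inv d g ?w"
    have u: "?u \<in> tree_V d" "g ?u = ?w" using aut_inv_props[OF gA w(1)] by auto
    let ?f = "loc_perm d g ?u"
    have fC: "?f \<in> C ?w" using gC[OF u(1)] glp[OF u(1)] u(2) by simp
    have fF': "?f \<in> F'" using glp[OF u(1)] by simp
    have "\<beta> (\<alpha> ?f 0) = \<beta> (inv (\<sigma> v) 0)" using alpha_coset0[OF C_in[OF w(1)] fC] w(2) by (simp add: C_def)
    moreover have "\<alpha> ?f 0 < n" using alpha_props(1)[OF fF' n_pos] .
    moreover have "inv (\<sigma> v) 0 < n" using permutes_in_image[OF permutes_inv[OF \<sigma>[OF v]]] n_pos by simp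
    ultimately have e: "\<alpha> ?f 0 = inv (\<sigma> v) 0" using beta_inj by blast
    have "fst c v = \<sigma> v \<circ> \<alpha> ?f" using v w(1) phi_fst[OF w(1), of g] by (simp add: c_def Gnd_mult_def xe)
    then show ?thesis using e permutes_inverses(1)[OF \<sigma>[OF v]] by simp
  qed
  define z where "z = (\<lambda>v\<in>tree_V d. (fst c v, loc_perm d (snd c) v))"
  have cA: "snd c \<in> Aut d" using CD(1) .
  have zP: "z \<in> (\<Pi>\<^sub>E v\<in>tree_V d. PP n d)"
    unfolding z_def restrict_PiE_iff PP_def using CD(2) fc0 loc_perm_permutes[OF cA] by auto
  have bp: "bperm [] (Rth d z) (snd (z [])) w = loc_perm d (snd c) w" if "w \<in> tree_V d" for w
    using that
  proof (induction w rule: rev_induct)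
    case Nil then show ?case by (simp add: bperm_def z_def)
  next
    case (snoc a w)
    have w: "w \<in> tree_V d" "a < d" using snoc.prems by (auto simp: tree_V_snoc)
    have nb: "nbr w a = w @ [a]" using snoc.prems by (auto simp: nbr_def tree_V_snoc)
    let ?q = "loc_perm d (snd c) (w @ [a])"
    have q: "?q permutes {..<d}" using loc_perm_permutes[OF cA snoc.prems] .
    have zq: "snd (z (w @ [a])) = ?q" using snoc.prems by (simp add: z_def)
    have "?q a = loc_perm d (snd c) w a" using loc_perm_consistent[OF cA w] nb by simp
    also have "\<dots> = bperm [] (Rth d z) (snd (z [])) w a" using snoc.IH[OF w(1)] by simp
    finally have qa: "?q a = bperm [] (Rth d z) (snd (z [])) w a" .
    have "Rth d z (w @ [a]) (nbr (fst (bldr [] (Rth d z) (snd (z [])) (rev w))) (bperm [] (Rth d z) (snd (z [])) w a)) a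
            (bperm [] (Rth d z) (snd (z [])) w a) = ?q"
    proof -
      have "Rth d z (w @ [a]) U a (?q a) = ?q" for U using zq q by (simp add: Rth_def)
      then show ?thesis using qa by metis
    qed
    then show ?case using bperm_snoc[of "[]" "Rth d z" "snd (z [])" w a] by simp
  qed
  have Thz: "Th d z = c"
  proof -
    have "fst (Th d z) v = fst c v" for v
      by (cases "v \<in> tree_V d") (auto simp: Th_def z_def CD(3))
    moreover have "snd (Th d z) = snd c"
    proof (rule Aut_eq[OF Th_main(1)[OF zP] cA])
      show "snd (Th d z) [] = snd c []" using Th_main(2)[OF zP] csnd g0 r0(2) by simp
      show "\<forall>w\<in>tree_V d. loc_perm d (snd (Th d z)) w = loc_perm d (snd c) w"
        using Th_main(3)[OF zP] bp by simp
    qed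
    ultimately show ?thesis by (simp add: prod_eq_iff fun_eq_iff)
  qed
  have mult: "Gnd_mult d c (\<phi> k) = Gnd_mult d x (\<phi> (g \<circ> k))" if k: "k \<in> G" for k
    unfolding c_def using Gnd_assoc[OF x phi_in_Gnd[OF gG] phi_in_Gnd[OF k]] phi_hom[OF gG k] by simp
  have "Gnd_mult d x ` (\<phi> ` G) = Gnd_mult d c ` (\<phi> ` G)"
  proof
    show "Gnd_mult d x ` \<phi> ` G \<subseteq> Gnd_mult d c ` \<phi> ` G"
    proof
      fix t assume "t \<in> Gnd_mult d x ` \<phi> ` G"
      then obtain k where k: "k \<in> G" "t = Gnd_mult d x (\<phi> k)" by blast
      have k': "aut_inv d g \<circ> k \<in> G" using G_comp[OF G_inv[OF gG] k(1)] .
      have "g \<circ> (aut_inv d g \<circ> k) = k" using comp_aut_inv(1)[OF gA] by (simp add: comp_assoc[symmetric])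
      then have "t = Gnd_mult d c (\<phi> (aut_inv d g \<circ> k))" using mult[OF k'] k(2) by simp
      then show "t \<in> Gnd_mult d c ` \<phi> ` G" using k' by blast
    qed
    show "Gnd_mult d c ` \<phi> ` G \<subseteq> Gnd_mult d x ` \<phi> ` G"
    proof
      fix t assume "t \<in> Gnd_mult d c ` \<phi> ` G"
      then obtain k where k: "k \<in> G" "t = Gnd_mult d c (\<phi> k)" by blast
      then have "t = Gnd_mult d x (\<phi> (g \<circ> k))" using mult by simp
      then show "t \<in> Gnd_mult d x ` \<phi> ` G" using G_comp[OF gG k(1)] by blast
    qed
  qed
  then show ?thesis using Thz zP by blast
qed

theorem phi_cocompact: "cocompact (Gnd_top n d) (Gnd_mult d) (\<phi> ` G)"
proof (rule cocompactI)
  have "compactin (PS n d) (topspace (PS n d))" using PS_compact[of n d] by (simp add: compact_space_def)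
  then show "compactin (Gnd_top n d) (Th d ` topspace (PS n d))" using image_compactin Th_cont by blast
  fix x assume "x \<in> topspace (Gnd_top n d)"
  then have "x \<in> Gnd n d" using topspace_Gnd_top by simp
  then show "\<exists>c\<in>Th d ` topspace (PS n d). Gnd_mult d x ` \<phi> ` G = Gnd_mult d c ` \<phi> ` G"
    using cover by simp
qed

end



theorem proposition2:
  fixes d n :: nat and F F' :: "(nat \<Rightarrow> nat) set" and \<beta> :: "nat \<Rightarrow> (nat \<Rightarrow> nat) set"
  assumes "d \<ge> 3"
    and "perm_group {..<d} F" and "perm_group {..<d} F'" and "F \<subseteq> F'"
    and "\<forall>f'\<in>F'. \<forall>a<d. f' a \<in> (\<lambda>f. f a) ` F"
    and "n = card (lcosets F' F)"
    and "bij_betw \<beta> {..<n} (lcosets F' F)" and "\<beta> 0 = F"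
  shows "phi n d \<beta> ` G_grp d F F' \<subseteq> Gnd n d
    \<and> (\<forall>g\<in>G_grp d F F'. \<forall>h\<in>G_grp d F F'. phi n d \<beta> (g \<circ> h) = Gnd_mult d (phi n d \<beta> g) (phi n d \<beta> h))
    \<and> inj_on (phi n d \<beta>) (G_grp d F F')
    \<and> continuous_map (G_top d F F') (Gnd_top n d) (phi n d \<beta>)
    \<and> closedin (Gnd_top n d) (phi n d \<beta> ` G_grp d F F')
    \<and> cocompact (Gnd_top n d) (Gnd_mult d) (phi n d \<beta> ` G_grp d F F')"
proof -
  interpret stp d n F F' \<beta>
    using assms(2-8) by unfold_locales
  have 1: "phi n d \<beta> ` G_grp d F F' \<subseteq> Gnd n d" using phi_in_Gnd by auto
  have 2: "\<forall>g\<in>G_grp d F F'. \<forall>h\<in>G_grp d F F'. phi n d \<beta> (g \<circ> h) = Gnd_mult d (phi n d \<beta> g) (phi n d \<beta> h)"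
    using phi_hom by blast
  have 3: "inj_on (phi n d \<beta>) (G_grp d F F')"
  proof (rule inj_onI)
    fix g h assume "phi n d \<beta> g = phi n d \<beta> h"
    then have "snd (phi n d \<beta> g) = snd (phi n d \<beta> h)" by simp
    then show "g = h" by (simp add: phi_snd)
  qed
  show ?thesis using 1 2 3 phi_continuous phi_closed phi_cocompact by blast
qed

end
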